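(* Consider FedProx, as described in the context, with $\alpha>0$, run for $T\ge1$ rounds with constant step size $\gamma=[2L_\alpha\sqrt{TE}]^{-1}$, where $L_\alpha=\alpha+L$. Assume that the bounded variance, bounded stochastic gradient norm, $L$-smoothness and lower-bounded objective assumptions of the context hold. Let $\widehat{\mathbf{w}}_T$ be drawn uniformly at random from $\{\overline{\mathbf{w}}_{t,k}:0\le t\le T-1,\,0\le k\le E-1\}$. Then $$\mathbb{E}\|\nabla F(\widehat{\mathbf{w}}_T)\|^2\le\frac{1}{\sqrt T}\Big[\frac{8L_\alpha\Delta}{\sqrt E}+\frac{LS\sigma^2}{L_\alpha\sqrt E}+\frac{\alpha E^{3/2}G^2}{L_\alpha}\Big]+\frac{2L^2EG^2}{L_\alpha^2T}+\frac{\alpha^2L\sqrt E\,G^2}{16L_\alpha^3T^{3/2}},$$ where $\Delta=F(\overline{\mathbf{w}}_{0,0})-f_{\inf}$ and $S=\sum_ip_i^2$.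
   Context: Setting: there are $C$ clients with weights $p_1,\dots,p_C\ge0$ satisfying $\sum_ip_i=1$. Each client has a local objective $F_i:\mathbb{R}^D\to\mathbb{R}$, and the global objective is $F=\sum_ip_iF_i$. FedProx with parameter $\alpha>0$, $E\ge1$ local steps and step sizes $\gamma_t$ works as follows. Every client participates in every round. In round $t$, each client sets $\mathbf{w}^i_{t,0}=\overline{\mathbf{w}}_{t,0}$ and, for $k=0,\dots,E-1$, updates $$\mathbf{w}^i_{t,k+1}=(1-\alpha\gamma_t)\mathbf{w}^i_{t,k}+\alpha\gamma_t\overline{\mathbf{w}}_{t,0}-\gamma_tg_i(\mathbf{w}^i_{t,k}),$$ where $g_i$ is a stochastic gradient of $F_i$, sampled independently across clients and steps given the past. The average iterate is $\overline{\mathbf{w}}_{t,k}=\sum_ip_i\mathbf{w}^i_{t,k}$, with $\overline{\mathbf{w}}_{t+1,0}=\overline{\mathbf{w}}_{t,E}$. $\mathbb{E}$ denotes total expectation. Assumptions: - Bounded variance: $\mathbb{E}\,g_i(\mathbf{w}^i_{t,k})=\nabla F_i(\mathbf{w}^i_{t,k})$ and $\mathbb{E}\|g_i(\mathbf{w}^i_{t,k})-\nabla F_i(\mathbf{w}^i_{t,k})\|^2\le\sigma^2$. - Bounded stochastic gradient norm: $\mathbb{E}\|g_i(\mathbf{w}^i_{t,k})\|^2\le G^2$ for all $i,t,k$. - $L$-smoothness: each $\nabla F_i$ is $L$-Lipschitz. - Lower-bounded objective: $F$ is bounded below by $f_{\inf}$. *)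

theory Defs
  imports "HOL-Probability.Probability"
begin

definition avg_iter :: "nat \<Rightarrow> (nat \<Rightarrow> real) \<Rightarrow> (nat \<Rightarrow> nat \<Rightarrow> nat \<Rightarrow> 'm \<Rightarrow> 'a::real_vector)
    \<Rightarrow> nat \<Rightarrow> nat \<Rightarrow> 'm \<Rightarrow> 'a" where
  "avg_iter C p w t k \<omega> = (\<Sum>i<C. p i *\<^sub>R w i t k \<omega>)"

definition before :: "nat \<times> nat \<Rightarrow> nat \<times> nat \<Rightarrow> bool" where
  "before a b \<longleftrightarrow> fst a < fst b \<or> (fst a = fst b \<and> snd a < snd b)"

end

theory Submission
  imports Defs
begin

definition sqi :: "'m measure \<Rightarrow> ('m \<Rightarrow> 'a::euclidean_space) \<Rightarrow> bool" where
  "sqi M X \<longleftrightarrow> X \<in> borel_measurable M \<and> integrable M (\<lambda>\<omega>. (norm (X \<omega>))\<^sup>2)"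

lemma sqiD: "sqi M X \<Longrightarrow> X \<in> borel_measurable M" "sqi M X \<Longrightarrow> integrable M (\<lambda>\<omega>. (norm (X \<omega>))\<^sup>2)"
  by (auto simp: sqi_def)

lemma sqi_const: "prob_space M \<Longrightarrow> sqi M (\<lambda>_. c)"
  unfolding sqi_def by (auto intro: prob_space.finite_measure finite_measure.integrable_const)

lemma sqi_cong: assumes "\<And>\<omega>. \<omega> \<in> space M \<Longrightarrow> X \<omega> = Y \<omega>" "sqi M X" shows "sqi M Y"
proof -
  have "Y \<in> borel_measurable M" using assms measurable_cong[of M X Y] by (auto simp: sqi_def)
  moreover have "integrable M (\<lambda>\<omega>. (norm (Y \<omega>))\<^sup>2) = integrable M (\<lambda>\<omega>. (norm (X \<omega>))\<^sup>2)"
    using assms(1) by (rule_tac Bochner_Integration.integrable_cong) auto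
  ultimately show ?thesis using assms(2) by (simp add: sqi_def)
qed

lemma sq_sum_le: "(a + b)\<^sup>2 \<le> 2 * a\<^sup>2 + 2 * (b::real)\<^sup>2"
proof -
  have "0 \<le> (a - b)\<^sup>2" by simp
  thus ?thesis by (simp add: power2_eq_square algebra_simps)
qed

lemma prod_le_sq_sum: "a \<ge> 0 \<Longrightarrow> b \<ge> 0 \<Longrightarrow> a * b \<le> a\<^sup>2 + (b::real)\<^sup>2"
proof -
  assume "a \<ge> 0" "b \<ge> 0"
  hence "0 \<le> a * b" by simp
  moreover have "0 \<le> (a - b)\<^sup>2" by simp
  ultimately show ?thesis by (simp add: power2_eq_square algebra_simps)
qed

lemma norm_add_sq_le: "(norm (x + y))\<^sup>2 \<le> 2 * (norm x)\<^sup>2 + 2 * (norm (y::'a::real_normed_vector))\<^sup>2"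
proof -
  have "norm (x + y) \<le> norm x + norm y" by (rule norm_triangle_ineq)
  hence "(norm (x + y))\<^sup>2 \<le> (norm x + norm y)\<^sup>2" by (simp add: power_mono)
  also have "\<dots> \<le> 2 * (norm x)\<^sup>2 + 2 * (norm y)\<^sup>2" by (rule sq_sum_le)
  finally show ?thesis .
qed

lemma sqi_add:
  fixes X Y :: "'m \<Rightarrow> 'a::euclidean_space"
  assumes a0: "sqi M X" "sqi M Y" shows "sqi M (\<lambda>\<omega>. X \<omega> + Y \<omega>)"
proof -
  have a: "X \<in> borel_measurable M" "integrable M (\<lambda>\<omega>. (norm (X \<omega>))\<^sup>2)"
    "Y \<in> borel_measurable M" "integrable M (\<lambda>\<omega>. (norm (Y \<omega>))\<^sup>2)" using a0 by (auto simp: sqi_def)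
  have "integrable M (\<lambda>\<omega>. (norm (X \<omega> + Y \<omega>))\<^sup>2)"
    apply (rule Bochner_Integration.integrable_bound[of M "\<lambda>\<omega>. 2 * (norm (X \<omega>))\<^sup>2 + 2 * (norm (Y \<omega>))\<^sup>2"])
    using a apply simp
    using a apply measurable
    using norm_add_sq_le by (auto simp: abs_le_iff)
  then show ?thesis using a by (simp add: sqi_def)
qed

lemma sqi_scaleR: "sqi M X \<Longrightarrow> sqi M (\<lambda>\<omega>. c *\<^sub>R X \<omega>)"
  unfolding sqi_def by (auto simp: power_mult_distrib)

lemma sqi_minus: "sqi M X \<Longrightarrow> sqi M (\<lambda>\<omega>. - X \<omega>)"
  using sqi_scaleR[of M X "-1"] by simp

lemma sqi_diff: "sqi M X \<Longrightarrow> sqi M Y \<Longrightarrow> sqi M (\<lambda>\<omega>. X \<omega> - Y \<omega>)"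
  using sqi_add[of M X "\<lambda>\<omega>. - Y \<omega>"] sqi_minus[of M Y] by simp

lemma sqi_sum: "finite I \<Longrightarrow> prob_space M \<Longrightarrow> (\<And>i. i \<in> I \<Longrightarrow> sqi M (X i)) \<Longrightarrow> sqi M (\<lambda>\<omega>. \<Sum>i\<in>I. X i \<omega>)"
  by (induction I rule: finite_induct) (auto intro: sqi_add sqi_const)

lemma sqi_lip:
  fixes f :: "'a::euclidean_space \<Rightarrow> 'b::euclidean_space"
  assumes f: "f \<in> borel_measurable borel" and lip: "\<And>x. norm (f x - f y0) \<le> K * norm (x - y0)"
    and X: "sqi M X" and P: "prob_space M"
  shows "sqi M (\<lambda>\<omega>. f (X \<omega>))"
proof -
  have mX: "X \<in> borel_measurable M" "integrable M (\<lambda>\<omega>. (norm (X \<omega>))\<^sup>2)" using X sqi_def by auto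
  have bnd: "(norm (f x))\<^sup>2 \<le> 2 * (norm (f y0) + \<bar>K\<bar> * norm y0)\<^sup>2 + 2 * K\<^sup>2 * (norm x)\<^sup>2" for x
  proof -
    have "norm (f x) \<le> norm (f y0) + \<bar>K\<bar> * norm (x - y0)"
      using lip[of x] norm_triangle_ineq2[of "f x" "f y0"] by (smt (verit) abs_ge_self mult_right_mono norm_ge_zero)
    also have "\<dots> \<le> (norm (f y0) + \<bar>K\<bar> * norm y0) + \<bar>K\<bar> * norm x"
      using norm_triangle_ineq4[of x y0] by (smt (verit) abs_ge_zero mult_left_mono distrib_left)
    finally have "(norm (f x))\<^sup>2 \<le> ((norm (f y0) + \<bar>K\<bar> * norm y0) + \<bar>K\<bar> * norm x)\<^sup>2"
      by (simp add: power_mono)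
    also have "\<dots> \<le> 2 * (norm (f y0) + \<bar>K\<bar> * norm y0)\<^sup>2 + 2 * (\<bar>K\<bar> * norm x)\<^sup>2"
      by (rule sq_sum_le)
    finally show ?thesis by (simp add: power_mult_distrib)
  qed
  have mf: "(\<lambda>\<omega>. f (X \<omega>)) \<in> borel_measurable M" using f mX(1) by measurable
  show ?thesis unfolding sqi_def
  proof (intro conjI mf)
    show "integrable M (\<lambda>\<omega>. (norm (f (X \<omega>)))\<^sup>2)"
      apply (rule Bochner_Integration.integrable_bound[of M "\<lambda>\<omega>. 2 * (norm (f y0) + \<bar>K\<bar> * norm y0)\<^sup>2 + 2 * K\<^sup>2 * (norm (X \<omega>))\<^sup>2"])
      using mX P apply (simp add: prob_space.finite_measure finite_measure.integrable_const)
      using mf apply measurable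
      using bnd by (auto simp: abs_le_iff)
  qed
qed
lemma abs_inner_le_sq: "\<bar>inner x y\<bar> \<le> (norm x)\<^sup>2 + (norm (y::'a::real_inner))\<^sup>2"
proof -
  have "\<bar>inner x y\<bar> \<le> norm x * norm y" by (rule Cauchy_Schwarz_ineq2)
  also have "\<dots> \<le> (norm x)\<^sup>2 + (norm y)\<^sup>2" by (rule prod_le_sq_sum) auto
  finally show ?thesis .
qed

lemma int_inner:
  fixes X Y :: "'m \<Rightarrow> 'a::euclidean_space"
  assumes "sqi M X" "sqi M Y" shows "integrable M (\<lambda>\<omega>. inner (X \<omega>) (Y \<omega>))"
proof -
  have "integrable M (\<lambda>\<omega>. (norm (X \<omega>))\<^sup>2 + (norm (Y \<omega>))\<^sup>2)" using assms by (simp add: sqi_def)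
  then show ?thesis
    apply (rule Bochner_Integration.integrable_bound)
    using assms apply (simp add: sqi_def)
    using abs_inner_le_sq by (auto simp: abs_le_iff)
qed

lemma sqi_comp:
  assumes X: "sqi M X" and P: "prob_space M" shows "sqi M (\<lambda>\<omega>. inner (X \<omega>) b)"
proof -
  have m: "(\<lambda>x. inner x b) \<in> borel_measurable borel"
    by (rule borel_measurable_continuous_onI) (intro continuous_intros)
  have l: "norm (inner x b - inner 0 b) \<le> norm b * norm (x - 0)" for x
    using Cauchy_Schwarz_ineq2[of x b] by (simp add: mult.commute)
  show ?thesis by (rule sqi_lip[OF m l X P])
qed

lemma int_mult: "sqi M (u::'m \<Rightarrow> real) \<Longrightarrow> sqi M v \<Longrightarrow> integrable M (\<lambda>\<omega>. u \<omega> * v \<omega>)"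
  using int_inner[of M u v] by simp

lemma tower_inner:
  fixes X g h :: "'m \<Rightarrow> 'a::euclidean_space"
  assumes P: "prob_space M" and sub: "subalgebra M N" and XN: "X \<in> borel_measurable N"
    and sX: "sqi M X" and sg: "sqi M g" and sh: "sqi M h"
    and ce: "\<And>b. b \<in> Basis \<Longrightarrow> AE \<omega> in M. real_cond_exp M N (\<lambda>\<omega>. g \<omega> \<bullet> b) \<omega> = h \<omega> \<bullet> b"
  shows "(\<integral>\<omega>. inner (X \<omega>) (g \<omega>) \<partial>M) = (\<integral>\<omega>. inner (X \<omega>) (h \<omega>) \<partial>M)"
proof -
  interpret finite_measure_subalgebra M N
    using P sub by (simp add: finite_measure_subalgebra_def finite_measure_subalgebra_axioms_def prob_space.finite_measure)
  have comp: "(\<integral>\<omega>. (X \<omega> \<bullet> b) * (g \<omega> \<bullet> b) \<partial>M) = (\<integral>\<omega>. (X \<omega> \<bullet> b) * (h \<omega> \<bullet> b) \<partial>M)"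
    if b: "b \<in> Basis" for b
  proof -
    have i1: "integrable M (\<lambda>\<omega>. (X \<omega> \<bullet> b) * (g \<omega> \<bullet> b))"
      by (rule int_mult[OF sqi_comp[OF sX P] sqi_comp[OF sg P]])
    have "(\<integral>\<omega>. (X \<omega> \<bullet> b) * (g \<omega> \<bullet> b) \<partial>M) = (\<integral>\<omega>. (X \<omega> \<bullet> b) * real_cond_exp M N (\<lambda>\<omega>. g \<omega> \<bullet> b) \<omega> \<partial>M)"
      apply (rule real_cond_exp_intg(2)[symmetric, OF i1])
      using XN apply simp
      using sqiD(1)[OF sqi_comp[OF sg P]] by simp
    also have "\<dots> = (\<integral>\<omega>. (X \<omega> \<bullet> b) * (h \<omega> \<bullet> b) \<partial>M)"
      apply (rule integral_cong_AE[OF borel_measurable_times[OF sqiD(1)[OF sqi_comp[OF sX P]] borel_measurable_cond_exp2]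
         borel_measurable_times[OF sqiD(1)[OF sqi_comp[OF sX P]] sqiD(1)[OF sqi_comp[OF sh P]]]])
      using ce[OF b] by eventually_elim simp
    finally show ?thesis .
  qed
  have "(\<integral>\<omega>. inner (X \<omega>) (g \<omega>) \<partial>M) = (\<integral>\<omega>. (\<Sum>b\<in>Basis. (X \<omega> \<bullet> b) * (g \<omega> \<bullet> b)) \<partial>M)"
    by (rule Bochner_Integration.integral_cong[OF refl]) (rule euclidean_inner)
  also have "\<dots> = (\<Sum>b\<in>Basis. (\<integral>\<omega>. (X \<omega> \<bullet> b) * (g \<omega> \<bullet> b) \<partial>M))"
    by (rule Bochner_Integration.integral_sum) (rule int_mult[OF sqi_comp[OF sX P] sqi_comp[OF sg P]])
  also have "\<dots> = (\<Sum>b\<in>Basis. (\<integral>\<omega>. (X \<omega> \<bullet> b) * (h \<omega> \<bullet> b) \<partial>M))"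
    using comp by simp
  also have "\<dots> = (\<integral>\<omega>. (\<Sum>b\<in>Basis. (X \<omega> \<bullet> b) * (h \<omega> \<bullet> b)) \<partial>M)"
    by (rule Bochner_Integration.integral_sum[symmetric]) (rule int_mult[OF sqi_comp[OF sX P] sqi_comp[OF sh P]])
  also have "\<dots> = (\<integral>\<omega>. inner (X \<omega>) (h \<omega>) \<partial>M)"
    by (rule Bochner_Integration.integral_cong[OF refl]) (rule euclidean_inner[symmetric])
  finally show ?thesis .
qed

definition clip :: "nat \<Rightarrow> real \<Rightarrow> real" where
  "clip n x = max (- real n) (min (real n) x)"

lemma clip_bound: "\<bar>clip n x\<bar> \<le> real n" unfolding clip_def by auto
lemma clip_le_abs: "\<bar>clip n x\<bar> \<le> \<bar>x\<bar>" unfolding clip_def by auto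
lemma clip_meas[measurable]: "clip n \<in> borel_measurable borel"
  unfolding clip_def by (rule borel_measurable_continuous_onI) (intro continuous_intros)
lemma clip_lim: "(\<lambda>n. clip n x) \<longlonglongrightarrow> x"
proof (rule tendsto_eventually)
  show "\<forall>\<^sub>F n in sequentially. clip n x = x"
    unfolding eventually_sequentially
  proof (intro exI allI impI)
    fix n assume "nat \<lceil>\<bar>x\<bar>\<rceil> \<le> n"
    hence "\<bar>x\<bar> \<le> real n" by linarith
    thus "clip n x = x" unfolding clip_def by auto
  qed
qed

lemma sqi_int: "sqi M (u::'m \<Rightarrow> real) \<Longrightarrow> prob_space M \<Longrightarrow> integrable M u"
proof -
  assume s: "sqi M u" and P: "prob_space M"
  have "integrable M (\<lambda>\<omega>. 1 + (norm (u \<omega>))\<^sup>2)"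
    using s P by (simp add: sqi_def prob_space.finite_measure finite_measure.integrable_const)
  moreover have "\<bar>y\<bar> \<le> 1 + y\<^sup>2" for y :: real
  proof (cases "\<bar>y\<bar> \<le> 1")
    case False
    have "1 * \<bar>y\<bar> \<le> \<bar>y\<bar> * \<bar>y\<bar>" by (rule mult_right_mono) (use False in auto)
    hence "\<bar>y\<bar> \<le> y\<^sup>2" by (simp only: abs_mult_self_eq power2_eq_square)
    thus ?thesis by linarith
  qed (simp add: add_increasing2)
  ultimately show ?thesis
    apply (intro Bochner_Integration.integrable_bound[of M "\<lambda>\<omega>. 1 + (norm (u \<omega>))\<^sup>2" u])
    using s by (auto simp: sqi_def)
qed

lemma indep_cross:
  fixes u v hu hv :: "'m \<Rightarrow> real"
  assumes P: "prob_space M" and sub: "subalgebra M N"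
    and su: "sqi M u" and sv: "sqi M v" and shu: "sqi M hu" and shv: "sqi M hv"
    and huN: "hu \<in> borel_measurable N" and hvN: "hv \<in> borel_measurable N"
    and cu: "AE \<omega> in M. real_cond_exp M N u \<omega> = hu \<omega>"
    and cv: "AE \<omega> in M. real_cond_exp M N v \<omega> = hv \<omega>"
    and H: "\<And>f1 f2. f1 \<in> borel_measurable borel \<Longrightarrow> f2 \<in> borel_measurable borel \<Longrightarrow>
        (\<exists>B. \<forall>x. \<bar>f1 x\<bar> \<le> B) \<Longrightarrow> (\<exists>B. \<forall>x. \<bar>f2 x\<bar> \<le> B) \<Longrightarrow>
        AE \<omega> in M. real_cond_exp M N (\<lambda>\<omega>. f1 (u \<omega>) * f2 (v \<omega>)) \<omega>
          = real_cond_exp M N (\<lambda>\<omega>. f1 (u \<omega>)) \<omega> * real_cond_exp M N (\<lambda>\<omega>. f2 (v \<omega>)) \<omega>"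
  shows "(\<integral>\<omega>. u \<omega> * v \<omega> \<partial>M) = (\<integral>\<omega>. hu \<omega> * hv \<omega> \<partial>M)"
proof -
  interpret finite_measure_subalgebra M N
    using P sub by (simp add: finite_measure_subalgebra_def finite_measure_subalgebra_axioms_def prob_space.finite_measure)
  have mu[measurable]: "u \<in> borel_measurable M" and mv[measurable]: "v \<in> borel_measurable M"
    and mhu[measurable]: "hu \<in> borel_measurable M" and mhv[measurable]: "hv \<in> borel_measurable M"
    using su sv shu shv by (auto simp: sqi_def)
  have iv: "integrable M v" and ihv: "integrable M hv" and iu: "integrable M u"
    using sqi_int sv shv su P by auto
  define un where "un n = (\<lambda>\<omega>. clip n (u \<omega>))" for n
  define vm where "vm m = (\<lambda>\<omega>. clip m (v \<omega>))" for m
  define cun where "cun n = real_cond_exp M N (un n)" for n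
  have mun[measurable]: "un n \<in> borel_measurable M" for n unfolding un_def by measurable
  have mvm[measurable]: "vm m \<in> borel_measurable M" for m unfolding vm_def by measurable
  have mcun[measurable]: "cun n \<in> borel_measurable N" "cun n \<in> borel_measurable M" for n
    unfolding cun_def by auto
  have iun: "integrable M (un n)" for n
    by (rule integrable_const_bound[where B="real n"]) (auto simp: un_def clip_bound)
  have ivm: "integrable M (vm m)" for m
    by (rule integrable_const_bound[where B="real m"]) (auto simp: vm_def clip_bound)
  have cun_bd: "AE \<omega> in M. \<bar>cun n \<omega>\<bar> \<le> real n" for n
  proof -
    have "AE \<omega> in M. cun n \<omega> \<le> real n" unfolding cun_def
      by (rule real_cond_exp_le_c[OF iun], rule AE_I2) (metis abs_le_iff clip_bound un_def)
    moreover have "AE \<omega> in M. cun n \<omega> \<ge> - real n" unfolding cun_def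
      by (rule real_cond_exp_ge_c[OF iun], rule AE_I2) (metis abs_le_iff clip_bound un_def minus_le_iff)
    ultimately show ?thesis by eventually_elim auto
  qed
  have step1: "(\<integral>\<omega>. un n \<omega> * vm m \<omega> \<partial>M) = (\<integral>\<omega>. cun n \<omega> * vm m \<omega> \<partial>M)" for n m
  proof -
    have iprod: "integrable M (\<lambda>\<omega>. un n \<omega> * vm m \<omega>)"
      by (rule integrable_const_bound[where B="real n * real m"])
        (auto simp: un_def vm_def abs_mult intro!: mult_mono clip_bound)
    have "(\<integral>\<omega>. un n \<omega> * vm m \<omega> \<partial>M) = (\<integral>\<omega>. real_cond_exp M N (\<lambda>\<omega>. un n \<omega> * vm m \<omega>) \<omega> \<partial>M)"
      using real_cond_exp_int(2)[OF iprod] by simp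
    also have "\<dots> = (\<integral>\<omega>. cun n \<omega> * real_cond_exp M N (vm m) \<omega> \<partial>M)"
    proof (rule integral_cong_AE)
      show "AE \<omega> in M. real_cond_exp M N (\<lambda>\<omega>. un n \<omega> * vm m \<omega>) \<omega> = cun n \<omega> * real_cond_exp M N (vm m) \<omega>"
      proof -
        have "AE \<omega> in M. real_cond_exp M N (\<lambda>\<omega>. clip n (u \<omega>) * clip m (v \<omega>)) \<omega>
          = real_cond_exp M N (\<lambda>\<omega>. clip n (u \<omega>)) \<omega> * real_cond_exp M N (\<lambda>\<omega>. clip m (v \<omega>)) \<omega>"
          by (rule H, simp, simp, rule exI[of _ "real n"], simp add: clip_bound, rule exI[of _ "real m"], simp add: clip_bound)
        then show ?thesis by (simp add: cun_def un_def vm_def)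
      qed
    qed auto
    also have "\<dots> = (\<integral>\<omega>. cun n \<omega> * vm m \<omega> \<partial>M)"
    proof (rule real_cond_exp_intg(2))
      show "integrable M (\<lambda>\<omega>. cun n \<omega> * vm m \<omega>)"
        apply (rule integrable_const_bound[where B="real n * real m"])
        using cun_bd[of n] apply eventually_elim
        by (auto simp: vm_def abs_mult intro!: mult_mono clip_bound)
    qed auto
    finally show ?thesis .
  qed
  have iwv: "integrable M (\<lambda>\<omega>. real n * \<bar>v \<omega>\<bar>)" for n using iv by auto
  have iwhv: "integrable M (\<lambda>\<omega>. real n * \<bar>hv \<omega>\<bar>)" for n using ihv by auto
  have step2: "(\<integral>\<omega>. un n \<omega> * v \<omega> \<partial>M) = (\<integral>\<omega>. cun n \<omega> * v \<omega> \<partial>M)" for n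
  proof -
    have l1: "(\<lambda>m. \<integral>\<omega>. un n \<omega> * vm m \<omega> \<partial>M) \<longlonglongrightarrow> (\<integral>\<omega>. un n \<omega> * v \<omega> \<partial>M)"
    proof (rule integral_dominated_convergence[OF _ _ iwv[of n]])
      show "AE \<omega> in M. (\<lambda>m. un n \<omega> * vm m \<omega>) \<longlonglongrightarrow> un n \<omega> * v \<omega>"
        unfolding vm_def by (intro AE_I2 tendsto_mult_left clip_lim)
      show "AE \<omega> in M. norm (un n \<omega> * vm m \<omega>) \<le> real n * \<bar>v \<omega>\<bar>" for m
        by (intro AE_I2) (auto simp: un_def vm_def abs_mult intro!: mult_mono clip_bound clip_le_abs)
    qed auto
    have l2: "(\<lambda>m. \<integral>\<omega>. cun n \<omega> * vm m \<omega> \<partial>M) \<longlonglongrightarrow> (\<integral>\<omega>. cun n \<omega> * v \<omega> \<partial>M)"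
    proof (rule integral_dominated_convergence[OF _ _ iwv[of n]])
      show "AE \<omega> in M. (\<lambda>m. cun n \<omega> * vm m \<omega>) \<longlonglongrightarrow> cun n \<omega> * v \<omega>"
        unfolding vm_def by (intro AE_I2 tendsto_mult_left clip_lim)
      show "AE \<omega> in M. norm (cun n \<omega> * vm m \<omega>) \<le> real n * \<bar>v \<omega>\<bar>" for m
        using cun_bd[of n] by eventually_elim (auto simp: vm_def abs_mult intro!: mult_mono clip_le_abs)
    qed auto
    show ?thesis using LIMSEQ_unique[OF l1] l2 step1 by simp
  qed
  have step3: "(\<integral>\<omega>. un n \<omega> * v \<omega> \<partial>M) = (\<integral>\<omega>. un n \<omega> * hv \<omega> \<partial>M)" for n
  proof -
    have icv: "integrable M (\<lambda>\<omega>. cun n \<omega> * v \<omega>)"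
      apply (rule Bochner_Integration.integrable_bound[OF iwv[of n]])
      apply simp
      using cun_bd[of n] by eventually_elim (auto simp: abs_mult intro!: mult_right_mono)
    have "(\<integral>\<omega>. cun n \<omega> * v \<omega> \<partial>M) = (\<integral>\<omega>. cun n \<omega> * real_cond_exp M N v \<omega> \<partial>M)"
      by (rule real_cond_exp_intg(2)[symmetric, OF icv]) auto
    also have "\<dots> = (\<integral>\<omega>. cun n \<omega> * hv \<omega> \<partial>M)"
      by (rule integral_cong_AE) (auto intro: cv[THEN AE_mp] AE_I2)
    also have "\<dots> = (\<integral>\<omega>. hv \<omega> * real_cond_exp M N (un n) \<omega> \<partial>M)"
      by (simp add: cun_def mult.commute)
    also have "\<dots> = (\<integral>\<omega>. hv \<omega> * un n \<omega> \<partial>M)"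
    proof (rule real_cond_exp_intg(2))
      show "integrable M (\<lambda>\<omega>. hv \<omega> * un n \<omega>)"
        apply (rule Bochner_Integration.integrable_bound[OF iwhv[of n]])
        apply simp
        by (intro AE_I2) (simp add: un_def abs_mult mult.commute[of "\<bar>hv _\<bar>"] mult_right_mono clip_bound)
    qed (auto simp: hvN)
    finally show ?thesis using step2[of n] by (simp add: mult.commute)
  qed
  have iuv: "integrable M (\<lambda>\<omega>. \<bar>u \<omega> * v \<omega>\<bar>)" using int_mult[OF su sv] by auto
  have iuhv: "integrable M (\<lambda>\<omega>. \<bar>u \<omega> * hv \<omega>\<bar>)" using int_mult[OF su shv] by auto
  have l3: "(\<lambda>n. \<integral>\<omega>. un n \<omega> * v \<omega> \<partial>M) \<longlonglongrightarrow> (\<integral>\<omega>. u \<omega> * v \<omega> \<partial>M)"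
  proof (rule integral_dominated_convergence[OF _ _ iuv])
    show "AE \<omega> in M. (\<lambda>n. un n \<omega> * v \<omega>) \<longlonglongrightarrow> u \<omega> * v \<omega>"
      unfolding un_def by (intro AE_I2 tendsto_mult_right clip_lim)
    show "AE \<omega> in M. norm (un n \<omega> * v \<omega>) \<le> \<bar>u \<omega> * v \<omega>\<bar>" for n
      by (intro AE_I2) (auto simp: un_def abs_mult intro!: mult_right_mono clip_le_abs)
  qed auto
  have l4: "(\<lambda>n. \<integral>\<omega>. un n \<omega> * hv \<omega> \<partial>M) \<longlonglongrightarrow> (\<integral>\<omega>. u \<omega> * hv \<omega> \<partial>M)"
  proof (rule integral_dominated_convergence[OF _ _ iuhv])
    show "AE \<omega> in M. (\<lambda>n. un n \<omega> * hv \<omega>) \<longlonglongrightarrow> u \<omega> * hv \<omega>"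
      unfolding un_def by (intro AE_I2 tendsto_mult_right clip_lim)
    show "AE \<omega> in M. norm (un n \<omega> * hv \<omega>) \<le> \<bar>u \<omega> * hv \<omega>\<bar>" for n
      by (intro AE_I2) (auto simp: un_def abs_mult intro!: mult_right_mono clip_le_abs)
  qed auto
  have "(\<integral>\<omega>. u \<omega> * v \<omega> \<partial>M) = (\<integral>\<omega>. u \<omega> * hv \<omega> \<partial>M)"
    using LIMSEQ_unique[OF l3] l4 step3 by simp
  also have "\<dots> = (\<integral>\<omega>. hv \<omega> * u \<omega> \<partial>M)" by (simp add: mult.commute)
  also have "\<dots> = (\<integral>\<omega>. hv \<omega> * real_cond_exp M N u \<omega> \<partial>M)"
    by (rule real_cond_exp_intg(2)[symmetric]) (auto simp: hvN int_mult[OF shv su])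
  also have "\<dots> = (\<integral>\<omega>. hu \<omega> * hv \<omega> \<partial>M)"
    by (rule integral_cong_AE) (auto intro: cu[THEN AE_mp] AE_I2 simp: mult.commute)
  finally show ?thesis .
qed

lemma deriv_line:
  fixes f :: "'a::euclidean_space \<Rightarrow> real"
  assumes d: "\<And>x. (f has_derivative (\<lambda>h. gf x \<bullet> h)) (at x)"
  shows "((\<lambda>s. f (x + s *\<^sub>R z)) has_real_derivative (gf (x + s *\<^sub>R z) \<bullet> z)) (at s)"
proof -
  have l: "((\<lambda>s. x + s *\<^sub>R z) has_derivative (\<lambda>h. h *\<^sub>R z)) (at s)"
    by (auto intro!: derivative_eq_intros)
  have "((\<lambda>s. f (x + s *\<^sub>R z)) has_derivative (\<lambda>h. gf (x + s *\<^sub>R z) \<bullet> (h *\<^sub>R z))) (at s)"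
    using has_derivative_compose[OF l d] by (simp add: o_def)
  moreover have "(\<lambda>h. gf (x + s *\<^sub>R z) \<bullet> (h *\<^sub>R z)) = (*) (gf (x + s *\<^sub>R z) \<bullet> z)"
    by (rule ext) simp
  ultimately show ?thesis
    unfolding has_field_derivative_def by simp
qed

lemma descent:
  fixes f :: "'a::euclidean_space \<Rightarrow> real"
  assumes d: "\<And>x. (f has_derivative (\<lambda>h. gf x \<bullet> h)) (at x)"
    and lip: "\<And>x y. norm (gf x - gf y) \<le> L * norm (x - y)"
  shows "f y \<le> f x + gf x \<bullet> (y - x) + L / 2 * (norm (y - x))\<^sup>2"
proof -
  define z where "z = y - x"
  define \<phi> where "\<phi> s = f (x + s *\<^sub>R z) - s * (gf x \<bullet> z) - L / 2 * s\<^sup>2 * (norm z)\<^sup>2" for s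
  define \<phi>' where "\<phi>' s = gf (x + s *\<^sub>R z) \<bullet> z - gf x \<bullet> z - L * s * (norm z)\<^sup>2" for s
  have D: "(\<phi> has_real_derivative \<phi>' s) (at s)" for s
    unfolding \<phi>_def \<phi>'_def
    by (rule derivative_eq_intros deriv_line[OF d] refl | simp add: power2_eq_square)+
  obtain \<xi> where \<xi>: "0 < \<xi>" "\<xi> < 1" "\<phi> 1 - \<phi> 0 = (1 - 0) * \<phi>' \<xi>"
    using MVT2[of 0 1 \<phi> \<phi>'] D by auto
  have "\<phi>' \<xi> \<le> 0"
  proof -
    have "gf (x + \<xi> *\<^sub>R z) \<bullet> z - gf x \<bullet> z = (gf (x + \<xi> *\<^sub>R z) - gf x) \<bullet> z" by (simp add: inner_diff_left)
    also have "\<dots> \<le> norm (gf (x + \<xi> *\<^sub>R z) - gf x) * norm z" by (rule norm_cauchy_schwarz)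
    also have "\<dots> \<le> (L * norm (\<xi> *\<^sub>R z)) * norm z"
      using lip[of "x + \<xi> *\<^sub>R z" x] by (simp add: mult_right_mono)
    also have "\<dots> = L * \<xi> * (norm z)\<^sup>2" using \<xi> by (simp add: power2_eq_square)
    finally show ?thesis unfolding \<phi>'_def by simp
  qed
  then have "\<phi> 1 \<le> \<phi> 0" using \<xi> by simp
  then show ?thesis unfolding \<phi>_def z_def by simp
qed

lemma alg_step:
  fixes v D m :: "'a::euclidean_space"
  assumes al: "\<alpha> > 0" and ga: "\<gamma> \<ge> 0" and L: "L \<ge> 0" and Lg: "L * \<gamma> \<le> 1/2"
  shows "- (v \<bullet> ((\<alpha> * \<gamma>) *\<^sub>R D + \<gamma> *\<^sub>R m)) + L / 2 * (norm ((\<alpha> * \<gamma>) *\<^sub>R D + \<gamma> *\<^sub>R m))\<^sup>2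
    \<le> - \<gamma> / 4 * (norm v)\<^sup>2 + (\<alpha>\<^sup>2 * \<gamma> + L * \<alpha>\<^sup>2 * \<gamma>\<^sup>2) * (norm D)\<^sup>2 + \<gamma> / 2 * (norm (v - m))\<^sup>2"
proof -
  have f1: "0 \<le> (norm v)\<^sup>2 + 4 * \<alpha> * (v \<bullet> D) + 4 * \<alpha>\<^sup>2 * (norm D)\<^sup>2"
  proof -
    have "0 \<le> (norm (v + (2 * \<alpha>) *\<^sub>R D))\<^sup>2" by simp
    also have "\<dots> = (norm v)\<^sup>2 + 4 * \<alpha> * (v \<bullet> D) + 4 * \<alpha>\<^sup>2 * (norm D)\<^sup>2"
      by (simp only: power2_norm_eq_inner) (simp add: inner_add_left inner_add_right inner_commute power2_eq_square algebra_simps)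
    finally show ?thesis .
  qed
  have f1': "0 \<le> \<gamma> / 4 * (norm v)\<^sup>2 + (\<alpha> * \<gamma>) * (v \<bullet> D) + \<alpha>\<^sup>2 * \<gamma> * (norm D)\<^sup>2"
  proof -
    have "0 \<le> \<gamma> / 4 * ((norm v)\<^sup>2 + 4 * \<alpha> * (v \<bullet> D) + 4 * \<alpha>\<^sup>2 * (norm D)\<^sup>2)"
      using f1 ga by simp
    thus ?thesis by (simp add: algebra_simps)
  qed
  have f2: "(norm ((\<alpha> * \<gamma>) *\<^sub>R D + \<gamma> *\<^sub>R m))\<^sup>2 \<le> 2 * (\<alpha> * \<gamma>)\<^sup>2 * (norm D)\<^sup>2 + 2 * \<gamma>\<^sup>2 * (norm m)\<^sup>2"
    using norm_add_sq_le[of "(\<alpha> * \<gamma>) *\<^sub>R D" "\<gamma> *\<^sub>R m"] by (simp add: power_mult_distrib)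
  have f2': "L / 2 * (norm ((\<alpha> * \<gamma>) *\<^sub>R D + \<gamma> *\<^sub>R m))\<^sup>2 \<le> L * \<alpha>\<^sup>2 * \<gamma>\<^sup>2 * (norm D)\<^sup>2 + (L * \<gamma>) * \<gamma> * (norm m)\<^sup>2"
  proof -
    have "L / 2 * (norm ((\<alpha> * \<gamma>) *\<^sub>R D + \<gamma> *\<^sub>R m))\<^sup>2 \<le> L / 2 * (2 * (\<alpha> * \<gamma>)\<^sup>2 * (norm D)\<^sup>2 + 2 * \<gamma>\<^sup>2 * (norm m)\<^sup>2)"
      using f2 L by (intro mult_left_mono) auto
    thus ?thesis by (simp add: algebra_simps power_mult_distrib power2_eq_square)
  qed
  have f3: "(L * \<gamma>) * \<gamma> * (norm m)\<^sup>2 \<le> 1/2 * \<gamma> * (norm m)\<^sup>2"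
    using Lg ga by (intro mult_right_mono) auto
  have f4: "(norm (v - m))\<^sup>2 = (norm v)\<^sup>2 - 2 * (v \<bullet> m) + (norm m)\<^sup>2"
    by (simp only: power2_norm_eq_inner) (simp add: inner_diff_left inner_diff_right inner_commute)
  have f5: "v \<bullet> ((\<alpha> * \<gamma>) *\<^sub>R D + \<gamma> *\<^sub>R m) = (\<alpha> * \<gamma>) * (v \<bullet> D) + \<gamma> * (v \<bullet> m)"
    by (simp add: inner_add_right)
  show ?thesis using f1' f2' f3 f5 unfolding f4 by (simp add: algebra_simps)
qed

locale fedprox =
  fixes M :: "'m measure"
    and Filt :: "nat \<Rightarrow> nat \<Rightarrow> 'm measure"
    and C E T :: nat
    and p :: "nat \<Rightarrow> real"
    and F :: "nat \<Rightarrow> 'a::euclidean_space \<Rightarrow> real"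
    and gradF :: "nat \<Rightarrow> 'a \<Rightarrow> 'a"
    and w g :: "nat \<Rightarrow> nat \<Rightarrow> nat \<Rightarrow> 'm \<Rightarrow> 'a"
    and w0 :: 'a
    and \<alpha> \<gamma> L \<sigma> G f_inf :: real
  assumes prob: "prob_space M"
    and weights_nonneg: "\<And>i. i < C \<Longrightarrow> p i \<ge> 0"
    and weights_sum: "(\<Sum>i<C. p i) = 1"
    and alpha_pos: "\<alpha> > 0"
    and E_ge: "E \<ge> 1"
    and T_ge: "T \<ge> 1"
    and step: "\<gamma> = 1 / (2 * (\<alpha> + L) * sqrt (real T * real E))"
    and grad: "\<And>i x. i < C \<Longrightarrow> (F i has_derivative (\<lambda>h. gradF i x \<bullet> h)) (at x)"
    and smooth: "\<And>i x y. i < C \<Longrightarrow> norm (gradF i x - gradF i y) \<le> L * norm (x - y)"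
    and lower: "\<And>x. (\<Sum>i<C. p i * F i x) \<ge> f_inf"
    and init: "\<And>i \<omega>. i < C \<Longrightarrow> \<omega> \<in> space M \<Longrightarrow> w i 0 0 \<omega> = w0"
    and restart: "\<And>i t \<omega>. i < C \<Longrightarrow> \<omega> \<in> space M \<Longrightarrow>
        w i (Suc t) 0 \<omega> = avg_iter C p w t E \<omega>"
    and update: "\<And>i t k \<omega>. i < C \<Longrightarrow> k < E \<Longrightarrow> \<omega> \<in> space M \<Longrightarrow>
        w i t (Suc k) \<omega> = (1 - \<alpha> * \<gamma>) *\<^sub>R w i t k \<omega> + (\<alpha> * \<gamma>) *\<^sub>R avg_iter C p w t 0 \<omega>
                          - \<gamma> *\<^sub>R g i t k \<omega>"
    and g_meas: "\<And>i t k. i < C \<Longrightarrow> k < E \<Longrightarrow> g i t k \<in> borel_measurable M"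
    and filt_sub: "\<And>t k. subalgebra M (Filt t k)"
    and filt_past: "\<And>j t k t' k'. j < C \<Longrightarrow> k' < E \<Longrightarrow> before (t', k') (t, k) \<Longrightarrow>
        g j t' k' \<in> borel_measurable (Filt t k)"
    and unbiased: "\<And>i t k b. i < C \<Longrightarrow> k < E \<Longrightarrow> b \<in> Basis \<Longrightarrow>
        AE \<omega> in M. real_cond_exp M (Filt t k) (\<lambda>\<omega>. g i t k \<omega> \<bullet> b) \<omega> = gradF i (w i t k \<omega>) \<bullet> b"
    \<comment> \<open>independence across clients given the past\<close>
    and cond_indep: "\<And>t k f. k < E \<Longrightarrow>
        (\<forall>i<C. f i \<in> borel_measurable borel \<and> (\<exists>B. \<forall>x. \<bar>f i x\<bar> \<le> B)) \<Longrightarrow>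
        AE \<omega> in M. real_cond_exp M (Filt t k) (\<lambda>\<omega>. \<Prod>i<C. f i (g i t k \<omega>)) \<omega>
                   = (\<Prod>i<C. real_cond_exp M (Filt t k) (\<lambda>\<omega>. f i (g i t k \<omega>)) \<omega>)"
    and variance: "\<And>i t k. i < C \<Longrightarrow> k < E \<Longrightarrow>
        (\<integral>\<^sup>+ \<omega>. ennreal ((norm (g i t k \<omega> - gradF i (w i t k \<omega>)))\<^sup>2) \<partial>M) \<le> ennreal (\<sigma>\<^sup>2)"
    and second_moment: "\<And>i t k. i < C \<Longrightarrow> k < E \<Longrightarrow>
        (\<integral>\<^sup>+ \<omega>. ennreal ((norm (g i t k \<omega>))\<^sup>2) \<partial>M) \<le> ennreal (G\<^sup>2)"

begin

definition avg where "avg t k \<omega> = avg_iter C p w t k \<omega>"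
definition Fg where "Fg x = (\<Sum>i<C. p i * F i x)"
definition gFg where "gFg x = (\<Sum>i<C. p i *\<^sub>R gradF i x)"

lemma P: "prob_space M" by (rule prob)

lemma C_pos: "C \<ge> 1"
  using weights_sum by (cases C) auto

lemma L_nonneg: "L \<ge> 0"
proof -
  obtain b :: 'a where b: "b \<in> Basis" using nonempty_Basis by blast
  hence "norm b = 1" by simp
  have "0 \<le> norm (gradF 0 b - gradF 0 0)" by simp
  also have "\<dots> \<le> L * norm (b - 0)" using smooth[of 0 b 0] C_pos by simp
  finally show ?thesis using \<open>norm b = 1\<close> by simp
qed

lemma La_pos: "\<alpha> + L > 0" using alpha_pos L_nonneg by simp

lemma gamma_pos: "\<gamma> > 0"
  using La_pos T_ge E_ge by (simp add: step)

lemma TE1: "real T * real E \<ge> 1"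
proof -
  have "real T \<ge> 1" "real E \<ge> 1" using T_ge E_ge by auto
  then show ?thesis using mult_mono[of 1 "real T" 1 "real E"] by simp
qed

lemma sqrtTE: "sqrt (real T * real E) \<ge> 1"
  using TE1 by simp

lemma gamma_La: "(\<alpha> + L) * \<gamma> \<le> 1/2"
proof -
  have aux: "a > 0 \<Longrightarrow> (s::real) > 0 \<Longrightarrow> g = 1 / (2 * a * s) \<Longrightarrow> a * g = 1 / (2 * s)" for a s g
    by simp
  have "(\<alpha> + L) * \<gamma> = 1 / (2 * sqrt (real T * real E))"
    by (rule aux[OF La_pos _ step]) (use sqrtTE in simp)
  also have "\<dots> \<le> 1/2" using sqrtTE by (simp add: divide_simps)
  finally show ?thesis .
qed

lemma Lg: "L * \<gamma> \<le> 1/2"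
  using gamma_La gamma_pos alpha_pos by (smt (verit) mult_right_mono)

lemma ag: "\<alpha> * \<gamma> \<le> 1/2"
  using gamma_La gamma_pos L_nonneg by (smt (verit) mult_right_mono)

lemma sum_p_nonneg: "0 \<le> p i" if "i < C" using weights_nonneg that by simp

lemma gradF_meas: "i < C \<Longrightarrow> gradF i \<in> borel_measurable borel"
  apply (rule borel_measurable_continuous_onI)
  apply (rule lipschitz_on_continuous_on[where L=L])
  apply (rule lipschitz_onI)
  using smooth L_nonneg by (auto simp: dist_norm)

lemma gFg_meas: "gFg \<in> borel_measurable borel"
  unfolding gFg_def using gradF_meas by measurable

lemma gFg_lip: "norm (gFg x - gFg y) \<le> L * norm (x - y)"
proof -
  have "norm (gFg x - gFg y) = norm (\<Sum>i<C. p i *\<^sub>R (gradF i x - gradF i y))"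
    unfolding gFg_def by (simp add: sum_subtractf scaleR_diff_right)
  also have "\<dots> \<le> (\<Sum>i<C. norm (p i *\<^sub>R (gradF i x - gradF i y)))" by (rule norm_sum)
  also have "\<dots> \<le> (\<Sum>i<C. p i * (L * norm (x - y)))"
    by (rule sum_mono) (auto simp: sum_p_nonneg intro: mult_left_mono smooth)
  also have "\<dots> = L * norm (x - y)" using weights_sum by (simp add: sum_distrib_right[symmetric])
  finally show ?thesis .
qed

lemma Fg_deriv: "(Fg has_derivative (\<lambda>h. gFg x \<bullet> h)) (at x)"
proof -
  have "((\<lambda>x. \<Sum>i<C. p i * F i x) has_derivative (\<lambda>h. \<Sum>i<C. p i * (gradF i x \<bullet> h))) (at x)"
    by (intro has_derivative_sum has_derivative_mult_right grad) auto
  moreover have "(\<lambda>h. \<Sum>i<C. p i * (gradF i x \<bullet> h)) = (\<lambda>h. gFg x \<bullet> h)"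
    by (rule ext) (simp add: gFg_def inner_sum_left)
  ultimately show ?thesis unfolding Fg_def by simp
qed

lemma Fg_descent: "Fg y \<le> Fg x + gFg x \<bullet> (y - x) + L / 2 * (norm (y - x))\<^sup>2"
  by (rule descent[OF Fg_deriv gFg_lip])

lemma before_trans: "before a b \<Longrightarrow> before b c \<Longrightarrow> before a c"
  unfolding before_def by auto

lemma w_good:
  fixes Q :: "('m \<Rightarrow> 'a) \<Rightarrow> bool"
  assumes cong: "\<And>X Y. (\<And>\<omega>. \<omega> \<in> space M \<Longrightarrow> X \<omega> = Y \<omega>) \<Longrightarrow> Q X \<Longrightarrow> Q Y"
    and const: "Q (\<lambda>_. w0)" and zero: "Q (\<lambda>_. 0)"
    and add: "\<And>X Y. Q X \<Longrightarrow> Q Y \<Longrightarrow> Q (\<lambda>\<omega>. X \<omega> + Y \<omega>)"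
    and scale: "\<And>X c. Q X \<Longrightarrow> Q (\<lambda>\<omega>. c *\<^sub>R X \<omega>)"
  shows "k \<le> E \<Longrightarrow> (\<And>j t' k'. j < C \<Longrightarrow> k' < E \<Longrightarrow> before (t', k') (t, k) \<Longrightarrow> Q (g j t' k'))
    \<Longrightarrow> i < C \<Longrightarrow> Q (w i t k)"
proof -
  have sumQ: "Q (\<lambda>\<omega>. \<Sum>j\<in>I. c j *\<^sub>R X j \<omega>)" if "finite I" "\<And>j. j \<in> I \<Longrightarrow> Q (X j)" for I c X
    using that
  proof (induction I rule: finite_induct)
    case empty then show ?case using zero by simp
  next
    case (insert x F)
    have "Q (\<lambda>\<omega>. c x *\<^sub>R X x \<omega> + (\<Sum>j\<in>F. c j *\<^sub>R X j \<omega>))"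
      by (rule add[OF scale]) (use insert in auto)
    then show ?case using insert by simp
  qed
  have main: "\<forall>k i. k \<le> E \<longrightarrow> (\<forall>j t' k'. j < C \<longrightarrow> k' < E \<longrightarrow> before (t', k') (t, k) \<longrightarrow> Q (g j t' k'))
    \<longrightarrow> i < C \<longrightarrow> Q (w i t k)" for t
  proof (induction t)
    case 0
    have base: "Q (w i 0 0)" if "i < C" for i
      by (rule cong[OF _ const]) (use init that in auto)
    show ?case
    proof (intro allI impI)
      fix k i assume kE: "k \<le> E" and G: "\<forall>j t' k'. j < C \<longrightarrow> k' < E \<longrightarrow> before (t', k') (0, k) \<longrightarrow> Q (g j t' k')"
        and i: "i < C"
      from kE G i show "Q (w i 0 k)"
      proof (induction k arbitrary: i)
        case 0 then show ?case using base by simp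
      next
        case (Suc k)
        have IH: "Q (w j 0 k)" if "j < C" for j
          using Suc.IH[of j] Suc.prems that unfolding before_def by auto
        have "Q (\<lambda>\<omega>. (1 - \<alpha> * \<gamma>) *\<^sub>R w i 0 k \<omega> + (\<alpha> * \<gamma>) *\<^sub>R avg_iter C p w 0 0 \<omega> + (- \<gamma>) *\<^sub>R g i 0 k \<omega>)"
          apply (intro add scale)
          using IH Suc.prems apply simp
          unfolding avg_iter_def apply (rule sumQ) using base apply simp_all
          using Suc.prems unfolding before_def by auto
        then show ?case
          by (rule cong[rotated]) (use update Suc.prems in auto)
      qed
    qed
  next
    case (Suc t)
    have base: "Q (w i (Suc t) 0)" if "i < C" "\<forall>j t' k'. j < C \<longrightarrow> k' < E \<longrightarrow> before (t', k') (Suc t, 0) \<longrightarrow> Q (g j t' k')" for i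
    proof -
      have "Q (\<lambda>\<omega>. avg_iter C p w t E \<omega>)"
        unfolding avg_iter_def apply (rule sumQ) apply simp
        using Suc.IH that(2) unfolding before_def by auto
      then show ?thesis by (rule cong[rotated]) (use restart that in auto)
    qed
    show ?case
    proof (intro allI impI)
      fix k i assume kE: "k \<le> E" and G: "\<forall>j t' k'. j < C \<longrightarrow> k' < E \<longrightarrow> before (t', k') (Suc t, k) \<longrightarrow> Q (g j t' k')"
        and i: "i < C"
      have G0: "\<forall>j t' k'. j < C \<longrightarrow> k' < E \<longrightarrow> before (t', k') (Suc t, 0) \<longrightarrow> Q (g j t' k')"
        using G unfolding before_def by auto
      from kE G i show "Q (w i (Suc t) k)"
      proof (induction k arbitrary: i)
        case 0 then show ?case using base G0 by simp
      next
        case (Suc k)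
        have IH: "Q (w j (Suc t) k)" if "j < C" for j
          using Suc.IH[of j] Suc.prems that unfolding before_def by auto
        have "Q (\<lambda>\<omega>. (1 - \<alpha> * \<gamma>) *\<^sub>R w i (Suc t) k \<omega> + (\<alpha> * \<gamma>) *\<^sub>R avg_iter C p w (Suc t) 0 \<omega> + (- \<gamma>) *\<^sub>R g i (Suc t) k \<omega>)"
          apply (intro add scale)
          using IH Suc.prems apply simp
          unfolding avg_iter_def apply (rule sumQ) using base G0 apply simp_all
          using Suc.prems unfolding before_def by auto
        then show ?case
          by (rule cong[rotated]) (use update Suc.prems in auto)
      qed
    qed
  qed
  show "k \<le> E \<Longrightarrow> (\<And>j t' k'. j < C \<Longrightarrow> k' < E \<Longrightarrow> before (t', k') (t, k) \<Longrightarrow> Q (g j t' k'))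
    \<Longrightarrow> i < C \<Longrightarrow> Q (w i t k)"
    using main[of t] by blast
qed

lemma sub_space: "space (Filt t k) = space M"
  using filt_sub[of t k] by (simp add: subalgebra_def)

lemma g_sqi: "i < C \<Longrightarrow> k < E \<Longrightarrow> sqi M (g i t k)"
proof -
  assume i: "i < C" and k: "k < E"
  have m: "g i t k \<in> borel_measurable M" using g_meas i k by simp
  have "(\<integral>\<^sup>+ \<omega>. ennreal ((norm (g i t k \<omega>))\<^sup>2) \<partial>M) < \<infinity>"
    using second_moment[OF i k, of t] by (simp add: order_le_less_trans)
  then have "integrable M (\<lambda>\<omega>. (norm (g i t k \<omega>))\<^sup>2)"
    by (intro integrableI_nonneg) (use m in auto)
  then show ?thesis using m by (simp add: sqi_def)
qed

lemma w_sqi: "k \<le> E \<Longrightarrow> i < C \<Longrightarrow> sqi M (w i t k)"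
  by (rule w_good[where Q="sqi M"])
     (auto intro: sqi_cong sqi_const[OF P] sqi_add sqi_scaleR g_sqi)

lemma w_measF: "k < E \<Longrightarrow> i < C \<Longrightarrow> w i t k \<in> borel_measurable (Filt t k)"
proof (rule w_good[where Q="\<lambda>X. X \<in> borel_measurable (Filt t k)"])
  fix X Y :: "'m \<Rightarrow> 'a" assume "\<And>\<omega>. \<omega> \<in> space M \<Longrightarrow> X \<omega> = Y \<omega>" "X \<in> borel_measurable (Filt t k)"
  then show "Y \<in> borel_measurable (Filt t k)" using measurable_cong[of "Filt t k" X Y] sub_space by auto
qed (auto intro: filt_past)

lemma gradw_sqi: "k \<le> E \<Longrightarrow> i < C \<Longrightarrow> j < C \<Longrightarrow> sqi M (\<lambda>\<omega>. gradF j (w i t k \<omega>))"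
  by (rule sqi_lip[OF gradF_meas smooth w_sqi P])

lemma avg_sqi: "k \<le> E \<Longrightarrow> sqi M (avg t k)"
  unfolding avg_def avg_iter_def
  by (rule sqi_sum) (auto intro: sqi_scaleR w_sqi P)

lemma avg_measF: "k < E \<Longrightarrow> avg t k \<in> borel_measurable (Filt t k)"
  unfolding avg_def avg_iter_def using w_measF by measurable

lemma avg0_measF: "k < E \<Longrightarrow> avg t 0 \<in> borel_measurable (Filt t k)"
proof -
  assume k: "k < E"
  have "w i t 0 \<in> borel_measurable (Filt t k)" if "i < C" for i
  proof (rule w_good[where Q="\<lambda>X. X \<in> borel_measurable (Filt t k)"])
    fix X Y :: "'m \<Rightarrow> 'a" assume "\<And>\<omega>. \<omega> \<in> space M \<Longrightarrow> X \<omega> = Y \<omega>" "X \<in> borel_measurable (Filt t k)"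
    then show "Y \<in> borel_measurable (Filt t k)" using measurable_cong[of "Filt t k" X Y] sub_space by auto
  next
    fix j t' k' assume "j < C" "k' < E" "before (t', k') (t, 0)"
    then show "g j t' k' \<in> borel_measurable (Filt t k)" using filt_past[of j k' t' t k] unfolding before_def by auto
  qed (use that in auto)
  then show ?thesis unfolding avg_def avg_iter_def by measurable
qed

lemma gFavg_sqi: "k \<le> E \<Longrightarrow> sqi M (\<lambda>\<omega>. gFg (avg t k \<omega>))"
  by (rule sqi_lip[OF gFg_meas gFg_lip avg_sqi P])

lemma int_le_of_nn:
  assumes "integrable M (f :: 'm \<Rightarrow> real)" "\<And>\<omega>. f \<omega> \<ge> 0"
    "(\<integral>\<^sup>+ \<omega>. ennreal (f \<omega>) \<partial>M) \<le> ennreal c" "c \<ge> 0"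
  shows "(\<integral>\<omega>. f \<omega> \<partial>M) \<le> c"
  using assms nn_integral_eq_integral[OF assms(1)] by (simp add: ennreal_le_iff)

lemma g_moment: "i < C \<Longrightarrow> k < E \<Longrightarrow> (\<integral>\<omega>. (norm (g i t k \<omega>))\<^sup>2 \<partial>M) \<le> G\<^sup>2"
  by (rule int_le_of_nn[OF sqiD(2)[OF g_sqi] _ second_moment]) auto

lemma g_var: "i < C \<Longrightarrow> k < E \<Longrightarrow> (\<integral>\<omega>. (norm (g i t k \<omega> - gradF i (w i t k \<omega>)))\<^sup>2 \<partial>M) \<le> \<sigma>\<^sup>2"
  by (rule int_le_of_nn[OF sqiD(2)[OF sqi_diff[OF g_sqi gradw_sqi]] _ variance]) auto

definition gbar where "gbar t k \<omega> = (\<Sum>i<C. p i *\<^sub>R g i t k \<omega>)"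

lemma sum_p_const: "(\<Sum>i<C. p i *\<^sub>R x) = (x::'a)"
  using scaleR_sum_left[of p "{..<C}" x] weights_sum by simp

lemma avg_00: "\<omega> \<in> space M \<Longrightarrow> avg 0 0 \<omega> = w0"
  unfolding avg_def avg_iter_def by (simp add: init sum_p_const)

lemma avg_Suc0: "\<omega> \<in> space M \<Longrightarrow> avg (Suc t) 0 \<omega> = avg t E \<omega>"
  unfolding avg_def by (subst (1) avg_iter_def) (simp add: restart sum_p_const)

lemma w_t0: "\<omega> \<in> space M \<Longrightarrow> i < C \<Longrightarrow> w i t 0 \<omega> = avg t 0 \<omega>"
proof (cases t)
  case 0
  assume "\<omega> \<in> space M" "i < C"
  then show ?thesis using 0 avg_00 init by simp
next
  case (Suc t')
  assume "\<omega> \<in> space M" "i < C"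
  then show ?thesis using Suc avg_Suc0 restart by (simp add: avg_def)
qed

lemma avg_step:
  assumes k: "k < E" and om: "\<omega> \<in> space M"
  shows "avg t (Suc k) \<omega> = avg t k \<omega> - (\<alpha> * \<gamma>) *\<^sub>R (avg t k \<omega> - avg t 0 \<omega>) - \<gamma> *\<^sub>R gbar t k \<omega>"
proof -
  have "avg t (Suc k) \<omega> = (\<Sum>i<C. p i *\<^sub>R ((1 - \<alpha> * \<gamma>) *\<^sub>R w i t k \<omega> + (\<alpha> * \<gamma>) *\<^sub>R avg t 0 \<omega> - \<gamma> *\<^sub>R g i t k \<omega>))"
    unfolding avg_def avg_iter_def[of C p w t "Suc k"] by (rule sum.cong) (auto simp: update k om avg_def)
  also have "\<dots> = (1 - \<alpha> * \<gamma>) *\<^sub>R (\<Sum>i<C. p i *\<^sub>R w i t k \<omega>) + (\<alpha> * \<gamma>) *\<^sub>R (\<Sum>i<C. p i *\<^sub>R avg t 0 \<omega>)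
      - \<gamma> *\<^sub>R (\<Sum>i<C. p i *\<^sub>R g i t k \<omega>)"
    by (simp add: scaleR_add_right scaleR_diff_right sum.distrib sum_subtractf scaleR_sum_right mult.commute)
  also have "\<dots> = avg t k \<omega> - (\<alpha> * \<gamma>) *\<^sub>R (avg t k \<omega> - avg t 0 \<omega>) - \<gamma> *\<^sub>R gbar t k \<omega>"
    by (simp add: sum_p_const avg_def avg_iter_def gbar_def algebra_simps)
  finally show ?thesis .
qed

lemma drift:
  assumes om: "\<omega> \<in> space M" and i: "i < C"
  shows "k \<le> E \<Longrightarrow> norm (w i t k \<omega> - avg t 0 \<omega>) \<le> \<gamma> * (\<Sum>j<k. norm (g i t j \<omega>))"
proof (induction k)
  case 0 then show ?case using w_t0[OF om i] by simp
next
  case (Suc k)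
  have k: "k < E" using Suc by simp
  have "w i t (Suc k) \<omega> - avg t 0 \<omega> = (1 - \<alpha> * \<gamma>) *\<^sub>R (w i t k \<omega> - avg t 0 \<omega>) - \<gamma> *\<^sub>R g i t k \<omega>"
    using update[OF i k om] w_t0[OF om i] by (simp add: avg_def algebra_simps)
  then have "norm (w i t (Suc k) \<omega> - avg t 0 \<omega>) \<le> \<bar>1 - \<alpha> * \<gamma>\<bar> * norm (w i t k \<omega> - avg t 0 \<omega>) + \<gamma> * norm (g i t k \<omega>)"
    using norm_triangle_ineq4 gamma_pos by (metis abs_of_pos norm_scaleR)
  also have "\<dots> \<le> 1 * norm (w i t k \<omega> - avg t 0 \<omega>) + \<gamma> * norm (g i t k \<omega>)"
    using ag gamma_pos alpha_pos by (intro add_mono mult_right_mono) auto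
  also have "\<dots> \<le> \<gamma> * (\<Sum>j<Suc k. norm (g i t j \<omega>))"
    using Suc k by (simp add: distrib_left)
  finally show ?case .
qed

end

lemma prod_ij:
  assumes "finite I" "i \<in> I" "j \<in> I" "i \<noteq> j"
  shows "(\<Prod>l\<in>I. q l) = q i * q j * (\<Prod>l\<in>I - {i, j}. (q l :: real))"
proof -
  have "(\<Prod>l\<in>I. q l) = q i * (\<Prod>l\<in>I - {i}. q l)" using assms by (simp add: prod.remove)
  also have "(\<Prod>l\<in>I - {i}. q l) = q j * (\<Prod>l\<in>I - {i} - {j}. q l)"
    using assms by (intro prod.remove) auto
  finally show ?thesis by (simp add: Diff_insert2[symmetric] insert_commute mult.assoc)
qed

context fedprox
begin

definition hF where "hF i t k \<omega> = gradF i (w i t k \<omega>)"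
definition mF where "mF t k \<omega> = (\<Sum>i<C. p i *\<^sub>R hF i t k \<omega>)"

lemma hF_sqi: "k \<le> E \<Longrightarrow> i < C \<Longrightarrow> sqi M (hF i t k)"
  unfolding hF_def using gradw_sqi by simp

lemma hF_measF: "k < E \<Longrightarrow> i < C \<Longrightarrow> hF i t k \<in> borel_measurable (Filt t k)"
  unfolding hF_def using w_measF gradF_meas by measurable

lemma mF_sqi: "k \<le> E \<Longrightarrow> sqi M (mF t k)"
  unfolding mF_def by (rule sqi_sum) (auto intro: sqi_scaleR hF_sqi P)

lemma mF_measF: "k < E \<Longrightarrow> mF t k \<in> borel_measurable (Filt t k)"
  unfolding mF_def using hF_measF by measurable

lemma gbar_sqi: "k < E \<Longrightarrow> sqi M (gbar t k)"
  unfolding gbar_def by (rule sqi_sum) (auto intro: sqi_scaleR g_sqi P)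

lemma tower_g:
  assumes k: "k < E" and i: "i < C" and XN: "X \<in> borel_measurable (Filt t k)" and sX: "sqi M X"
  shows "(\<integral>\<omega>. X \<omega> \<bullet> g i t k \<omega> \<partial>M) = (\<integral>\<omega>. X \<omega> \<bullet> hF i t k \<omega> \<partial>M)"
  by (rule tower_inner[OF P filt_sub XN sX g_sqi[OF i k] hF_sqi[OF _ i]])
     (use unbiased[OF i k] k in \<open>auto simp: hF_def\<close>)

lemma tower_gbar:
  assumes k: "k < E" and XN: "X \<in> borel_measurable (Filt t k)" and sX: "sqi M X"
  shows "(\<integral>\<omega>. X \<omega> \<bullet> gbar t k \<omega> \<partial>M) = (\<integral>\<omega>. X \<omega> \<bullet> mF t k \<omega> \<partial>M)"
proof -
  have "(\<integral>\<omega>. X \<omega> \<bullet> gbar t k \<omega> \<partial>M) = (\<integral>\<omega>. (\<Sum>i<C. p i * (X \<omega> \<bullet> g i t k \<omega>)) \<partial>M)"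
    unfolding gbar_def by (simp add: inner_sum_right)
  also have "\<dots> = (\<Sum>i<C. p i * (\<integral>\<omega>. X \<omega> \<bullet> g i t k \<omega> \<partial>M))"
    by (subst Bochner_Integration.integral_sum) (auto intro: int_inner sX g_sqi k)
  also have "\<dots> = (\<Sum>i<C. p i * (\<integral>\<omega>. X \<omega> \<bullet> hF i t k \<omega> \<partial>M))"
    using tower_g[OF k _ XN sX] by simp
  also have "\<dots> = (\<integral>\<omega>. (\<Sum>i<C. p i * (X \<omega> \<bullet> hF i t k \<omega>)) \<partial>M)"
    by (subst Bochner_Integration.integral_sum) (auto intro!: int_inner sX hF_sqi k less_imp_le)
  also have "\<dots> = (\<integral>\<omega>. X \<omega> \<bullet> mF t k \<omega> \<partial>M)"
    unfolding mF_def by (simp add: inner_sum_right)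
  finally show ?thesis .
qed

lemma indep_H:
  assumes k: "k < E" and i: "i < C" and j: "j < C" and ij: "i \<noteq> j"
    and f1: "f1 \<in> borel_measurable borel" and f2: "f2 \<in> borel_measurable borel"
    and b1: "\<exists>B. \<forall>x. \<bar>f1 x\<bar> \<le> B" and b2: "\<exists>B. \<forall>x. \<bar>f2 x\<bar> \<le> B"
  shows "AE \<omega> in M. real_cond_exp M (Filt t k) (\<lambda>\<omega>. f1 (g i t k \<omega> \<bullet> b) * f2 (g j t k \<omega> \<bullet> b)) \<omega>
     = real_cond_exp M (Filt t k) (\<lambda>\<omega>. f1 (g i t k \<omega> \<bullet> b)) \<omega> * real_cond_exp M (Filt t k) (\<lambda>\<omega>. f2 (g j t k \<omega> \<bullet> b)) \<omega>"
proof -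
  interpret finite_measure_subalgebra M "Filt t k"
    using P filt_sub by (simp add: finite_measure_subalgebra_def finite_measure_subalgebra_axioms_def prob_space.finite_measure)
  define f where "f l = (if l = i then (\<lambda>x. f1 (x \<bullet> b)) else if l = j then (\<lambda>x. f2 (x \<bullet> b)) else (\<lambda>x. 1::real))" for l
  have hyp: "\<forall>l<C. f l \<in> borel_measurable borel \<and> (\<exists>B. \<forall>x. \<bar>f l x\<bar> \<le> B)"
  proof (intro allI impI conjI)
    fix l assume "l < C"
    have m1: "(\<lambda>x. f1 (x \<bullet> b)) \<in> borel_measurable (borel :: 'a measure)" using f1 by measurable
    have m2: "(\<lambda>x. f2 (x \<bullet> b)) \<in> borel_measurable (borel :: 'a measure)" using f2 by measurable
    show "f l \<in> borel_measurable borel" unfolding f_def using m1 m2 by simp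
    show "\<exists>B. \<forall>x. \<bar>f l x\<bar> \<le> B"
    proof -
      obtain B1 where B1: "\<forall>x. \<bar>f1 x\<bar> \<le> B1" using b1 by blast
      obtain B2 where B2: "\<forall>x. \<bar>f2 x\<bar> \<le> B2" using b2 by blast
      show ?thesis unfolding f_def using B1 B2 by (intro exI[of _ "max 1 (max B1 B2)"]) (auto simp: le_max_iff_disj)
    qed
  qed
  have A: "AE \<omega> in M. real_cond_exp M (Filt t k) (\<lambda>\<omega>. \<Prod>l<C. f l (g l t k \<omega>)) \<omega>
                   = (\<Prod>l<C. real_cond_exp M (Filt t k) (\<lambda>\<omega>. f l (g l t k \<omega>)) \<omega>)"
    by (rule cond_indep[OF k hyp])
  have rest: "(\<Prod>l\<in>{..<C} - {i, j}. q l) = 1" if "\<And>l. l \<notin> {i, j} \<Longrightarrow> q l = 1" for q :: "nat \<Rightarrow> real"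
    using that by (intro prod.neutral) auto
  have eq1: "(\<lambda>\<omega>. \<Prod>l<C. f l (g l t k \<omega>)) = (\<lambda>\<omega>. f1 (g i t k \<omega> \<bullet> b) * f2 (g j t k \<omega> \<bullet> b))"
  proof (rule ext)
    fix \<omega>
    have "(\<Prod>l<C. f l (g l t k \<omega>)) = f i (g i t k \<omega>) * f j (g j t k \<omega>) * (\<Prod>l\<in>{..<C} - {i, j}. f l (g l t k \<omega>))"
      by (rule prod_ij) (use i j ij in auto)
    also have "(\<Prod>l\<in>{..<C} - {i, j}. f l (g l t k \<omega>)) = 1" by (rule rest) (simp add: f_def)
    finally show "(\<Prod>l<C. f l (g l t k \<omega>)) = f1 (g i t k \<omega> \<bullet> b) * f2 (g j t k \<omega> \<bullet> b)"
      using ij by (simp add: f_def)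
  qed
  have c1: "AE \<omega> in M. real_cond_exp M (Filt t k) (\<lambda>\<omega>. 1) \<omega> = 1"
    by (rule real_cond_exp_F_meas) auto
  show ?thesis
    using A c1
  proof eventually_elim
    case (elim \<omega>)
    have "(\<Prod>l<C. real_cond_exp M (Filt t k) (\<lambda>\<omega>. f l (g l t k \<omega>)) \<omega>)
      = real_cond_exp M (Filt t k) (\<lambda>\<omega>. f i (g i t k \<omega>)) \<omega> * real_cond_exp M (Filt t k) (\<lambda>\<omega>. f j (g j t k \<omega>)) \<omega>
        * (\<Prod>l\<in>{..<C} - {i, j}. real_cond_exp M (Filt t k) (\<lambda>\<omega>. f l (g l t k \<omega>)) \<omega>)"
      by (rule prod_ij) (use i j ij in auto)
    also have "(\<Prod>l\<in>{..<C} - {i, j}. real_cond_exp M (Filt t k) (\<lambda>\<omega>. f l (g l t k \<omega>)) \<omega>) = 1"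
      by (rule rest) (simp add: f_def elim(2))
    finally show ?case using elim(1) eq1 ij by (simp add: f_def)
  qed
qed

lemma gg_cross:
  assumes k: "k < E" and i: "i < C" and j: "j < C" and ij: "i \<noteq> j"
  shows "(\<integral>\<omega>. g i t k \<omega> \<bullet> g j t k \<omega> \<partial>M) = (\<integral>\<omega>. hF i t k \<omega> \<bullet> hF j t k \<omega> \<partial>M)"
proof -
  have comp: "(\<integral>\<omega>. (g i t k \<omega> \<bullet> b) * (g j t k \<omega> \<bullet> b) \<partial>M) = (\<integral>\<omega>. (hF i t k \<omega> \<bullet> b) * (hF j t k \<omega> \<bullet> b) \<partial>M)"
    if b: "b \<in> Basis" for b
  proof (rule indep_cross[OF P filt_sub sqi_comp[OF g_sqi[OF i k] P] sqi_comp[OF g_sqi[OF j k] P]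
        sqi_comp[OF hF_sqi[OF _ i] P] sqi_comp[OF hF_sqi[OF _ j] P]])
    show "(\<lambda>\<omega>. hF i t k \<omega> \<bullet> b) \<in> borel_measurable (Filt t k)" using hF_measF[OF k i] by measurable
    show "(\<lambda>\<omega>. hF j t k \<omega> \<bullet> b) \<in> borel_measurable (Filt t k)" using hF_measF[OF k j] by measurable
    show "AE \<omega> in M. real_cond_exp M (Filt t k) (\<lambda>\<omega>. g i t k \<omega> \<bullet> b) \<omega> = hF i t k \<omega> \<bullet> b"
      using unbiased[OF i k b] by (simp add: hF_def)
    show "AE \<omega> in M. real_cond_exp M (Filt t k) (\<lambda>\<omega>. g j t k \<omega> \<bullet> b) \<omega> = hF j t k \<omega> \<bullet> b"
      using unbiased[OF j k b] by (simp add: hF_def)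
    show "AE \<omega> in M. real_cond_exp M (Filt t k) (\<lambda>\<omega>. f1 (g i t k \<omega> \<bullet> b) * f2 (g j t k \<omega> \<bullet> b)) \<omega> =
          real_cond_exp M (Filt t k) (\<lambda>\<omega>. f1 (g i t k \<omega> \<bullet> b)) \<omega> * real_cond_exp M (Filt t k) (\<lambda>\<omega>. f2 (g j t k \<omega> \<bullet> b)) \<omega>"
      if "f1 \<in> borel_measurable borel" "f2 \<in> borel_measurable borel" "\<exists>B. \<forall>x. \<bar>f1 x\<bar> \<le> B" "\<exists>B. \<forall>x. \<bar>f2 x\<bar> \<le> B"
      for f1 f2 by (rule indep_H[OF k i j ij that])
  qed (use k in auto)
  have "(\<integral>\<omega>. g i t k \<omega> \<bullet> g j t k \<omega> \<partial>M) = (\<integral>\<omega>. (\<Sum>b\<in>Basis. (g i t k \<omega> \<bullet> b) * (g j t k \<omega> \<bullet> b)) \<partial>M)"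
    by (rule Bochner_Integration.integral_cong[OF refl]) (rule euclidean_inner)
  also have "\<dots> = (\<Sum>b\<in>Basis. (\<integral>\<omega>. (g i t k \<omega> \<bullet> b) * (g j t k \<omega> \<bullet> b) \<partial>M))"
    by (rule Bochner_Integration.integral_sum) (rule int_mult[OF sqi_comp[OF g_sqi[OF i k] P] sqi_comp[OF g_sqi[OF j k] P]])
  also have "\<dots> = (\<Sum>b\<in>Basis. (\<integral>\<omega>. (hF i t k \<omega> \<bullet> b) * (hF j t k \<omega> \<bullet> b) \<partial>M))"
    using comp by simp
  also have "\<dots> = (\<integral>\<omega>. (\<Sum>b\<in>Basis. (hF i t k \<omega> \<bullet> b) * (hF j t k \<omega> \<bullet> b)) \<partial>M)"
    using k by (intro Bochner_Integration.integral_sum[symmetric] int_mult sqi_comp hF_sqi i j P) auto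
  also have "\<dots> = (\<integral>\<omega>. hF i t k \<omega> \<bullet> hF j t k \<omega> \<partial>M)"
    by (rule Bochner_Integration.integral_cong[OF refl]) (rule euclidean_inner[symmetric])
  finally show ?thesis .
qed

definition xi where "xi i t k \<omega> = g i t k \<omega> - hF i t k \<omega>"

lemma xi_sqi: "k < E \<Longrightarrow> i < C \<Longrightarrow> sqi M (xi i t k)"
  unfolding xi_def by (intro sqi_diff g_sqi hF_sqi) auto

lemma xi_cross:
  assumes k: "k < E" and i: "i < C" and j: "j < C" and ij: "i \<noteq> j"
  shows "(\<integral>\<omega>. xi i t k \<omega> \<bullet> xi j t k \<omega> \<partial>M) = 0"
proof -
  have kk: "k \<le> E" using k by simp
  note gi = g_sqi[OF i k] and gj = g_sqi[OF j k] and hi = hF_sqi[OF kk i] and hj = hF_sqi[OF kk j]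
  have "(\<integral>\<omega>. xi i t k \<omega> \<bullet> xi j t k \<omega> \<partial>M) =
     (\<integral>\<omega>. g i t k \<omega> \<bullet> g j t k \<omega> - hF j t k \<omega> \<bullet> g i t k \<omega> - (hF i t k \<omega> \<bullet> g j t k \<omega> - hF i t k \<omega> \<bullet> hF j t k \<omega>) \<partial>M)"
    unfolding xi_def by (simp add: inner_diff_left inner_diff_right inner_commute algebra_simps)
  also have "\<dots> = (\<integral>\<omega>. g i t k \<omega> \<bullet> g j t k \<omega> \<partial>M) - (\<integral>\<omega>. hF j t k \<omega> \<bullet> g i t k \<omega> \<partial>M)
      - ((\<integral>\<omega>. hF i t k \<omega> \<bullet> g j t k \<omega> \<partial>M) - (\<integral>\<omega>. hF i t k \<omega> \<bullet> hF j t k \<omega> \<partial>M))"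
    using int_inner[OF gi gj] int_inner[OF hj gi] int_inner[OF hi gj] int_inner[OF hi hj] by simp
  also have "\<dots> = 0"
    using gg_cross[OF k i j ij] tower_g[OF k i hF_measF[OF k j] hj] tower_g[OF k j hF_measF[OF k i] hi]
    by (simp add: inner_commute)
  finally show ?thesis .
qed

lemma gbar_mF: "gbar t k \<omega> - mF t k \<omega> = (\<Sum>i<C. p i *\<^sub>R xi i t k \<omega>)"
  unfolding gbar_def mF_def xi_def by (simp add: sum_subtractf scaleR_diff_right)

lemma noise:
  assumes k: "k < E"
  shows "(\<integral>\<omega>. (norm (gbar t k \<omega> - mF t k \<omega>))\<^sup>2 \<partial>M) \<le> (\<Sum>i<C. (p i)\<^sup>2) * \<sigma>\<^sup>2"
proof -
  have pw: "(norm (gbar t k \<omega> - mF t k \<omega>))\<^sup>2 = (\<Sum>i<C. \<Sum>j<C. (p i * p j) * (xi i t k \<omega> \<bullet> xi j t k \<omega>))" for \<omega>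
    unfolding gbar_mF power2_norm_eq_inner by (simp add: inner_sum_left inner_sum_right sum_distrib_left mult.assoc inner_commute mult.left_commute)
  have ii: "integrable M (\<lambda>\<omega>. (p i * p j) * (xi i t k \<omega> \<bullet> xi j t k \<omega>))" if "i < C" "j < C" for i j
    using int_inner[OF xi_sqi[OF k that(1)] xi_sqi[OF k that(2)]] by simp
  have "(\<integral>\<omega>. (\<Sum>i<C. \<Sum>j<C. (p i * p j) * (xi i t k \<omega> \<bullet> xi j t k \<omega>)) \<partial>M)
      = (\<Sum>i<C. (\<integral>\<omega>. (\<Sum>j<C. (p i * p j) * (xi i t k \<omega> \<bullet> xi j t k \<omega>)) \<partial>M))"
    by (rule Bochner_Integration.integral_sum) (auto intro!: Bochner_Integration.integrable_sum ii)
  also have "\<dots> = (\<Sum>i<C. \<Sum>j<C. (\<integral>\<omega>. (p i * p j) * (xi i t k \<omega> \<bullet> xi j t k \<omega>) \<partial>M))"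
    by (rule sum.cong[OF refl], rule Bochner_Integration.integral_sum, rule ii) auto
  finally have "(\<integral>\<omega>. (\<Sum>i<C. \<Sum>j<C. (p i * p j) * (xi i t k \<omega> \<bullet> xi j t k \<omega>)) \<partial>M)
      = (\<Sum>i<C. \<Sum>j<C. (p i * p j) * (\<integral>\<omega>. xi i t k \<omega> \<bullet> xi j t k \<omega> \<partial>M))" by simp
  note eqI = this
  have "(\<integral>\<omega>. (norm (gbar t k \<omega> - mF t k \<omega>))\<^sup>2 \<partial>M) = (\<integral>\<omega>. (\<Sum>i<C. \<Sum>j<C. (p i * p j) * (xi i t k \<omega> \<bullet> xi j t k \<omega>)) \<partial>M)"
    by (simp add: pw)
  also have "\<dots> = (\<Sum>i<C. \<Sum>j<C. (p i * p j) * (\<integral>\<omega>. xi i t k \<omega> \<bullet> xi j t k \<omega> \<partial>M))"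
    by (rule eqI)
  also have "\<dots> = (\<Sum>i<C. (p i)\<^sup>2 * (\<integral>\<omega>. (norm (xi i t k \<omega>))\<^sup>2 \<partial>M))"
  proof (rule sum.cong[OF refl])
    fix i assume i: "i \<in> {..<C}"
    have "(\<Sum>j<C. (p i * p j) * (\<integral>\<omega>. xi i t k \<omega> \<bullet> xi j t k \<omega> \<partial>M))
        = (\<Sum>j<C. if j = i then (p i)\<^sup>2 * (\<integral>\<omega>. (norm (xi i t k \<omega>))\<^sup>2 \<partial>M) else 0)"
      using xi_cross[OF k] i unfolding power2_norm_eq_inner by (intro sum.cong) (auto simp: power2_eq_square)
    also have "\<dots> = (p i)\<^sup>2 * (\<integral>\<omega>. (norm (xi i t k \<omega>))\<^sup>2 \<partial>M)" using i by simp
    finally show "(\<Sum>j<C. (p i * p j) * (\<integral>\<omega>. xi i t k \<omega> \<bullet> xi j t k \<omega> \<partial>M)) = (p i)\<^sup>2 * (\<integral>\<omega>. (norm (xi i t k \<omega>))\<^sup>2 \<partial>M)" .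
  qed
  also have "\<dots> \<le> (\<Sum>i<C. (p i)\<^sup>2 * \<sigma>\<^sup>2)"
    using g_var[OF _ k] by (intro sum_mono mult_left_mono) (auto simp: xi_def hF_def)
  also have "\<dots> = (\<Sum>i<C. (p i)\<^sup>2) * \<sigma>\<^sup>2" by (simp add: sum_distrib_right)
  finally show ?thesis .
qed

end

lemma weighted_sq_le:
  fixes p x :: "nat \<Rightarrow> real"
  assumes "\<And>i. i \<in> I \<Longrightarrow> p i \<ge> 0" "(\<Sum>i\<in>I. p i) = 1"
  shows "(\<Sum>i\<in>I. p i * x i)\<^sup>2 \<le> (\<Sum>i\<in>I. p i * (x i)\<^sup>2)"
proof -
  have "(\<Sum>i\<in>I. p i * x i) = (\<Sum>i\<in>I. (sqrt (p i) * x i) * sqrt (p i))"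
    using assms(1) by (intro sum.cong) (auto simp: real_sqrt_mult[symmetric] mult_ac)
  then have "(\<Sum>i\<in>I. p i * x i)\<^sup>2 \<le> (\<Sum>i\<in>I. (sqrt (p i) * x i)\<^sup>2) * (\<Sum>i\<in>I. (sqrt (p i))\<^sup>2)"
    using Cauchy_Schwarz_ineq_sum[of "\<lambda>i. sqrt (p i) * x i" "\<lambda>i. sqrt (p i)" I] by simp
  also have "(\<Sum>i\<in>I. (sqrt (p i))\<^sup>2) = 1" using assms by (simp add: sum.cong[OF refl real_sqrt_pow2])
  also have "(\<Sum>i\<in>I. (sqrt (p i) * x i)\<^sup>2) = (\<Sum>i\<in>I. p i * (x i)\<^sup>2)"
    using assms(1) by (intro sum.cong) (auto simp: power_mult_distrib)
  finally show ?thesis by simp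
qed

context fedprox
begin

definition rr where "rr t k \<omega> = (\<Sum>i<C. p i * norm (w i t k \<omega> - avg t 0 \<omega>))"

lemma nD_le: "\<omega> \<in> space M \<Longrightarrow> norm (avg t k \<omega> - avg t 0 \<omega>) \<le> rr t k \<omega>"
proof -
  assume om: "\<omega> \<in> space M"
  have "(\<Sum>i<C. p i *\<^sub>R (w i t k \<omega> - avg t 0 \<omega>)) = (\<Sum>i<C. p i *\<^sub>R w i t k \<omega>) - (\<Sum>i<C. p i *\<^sub>R avg t 0 \<omega>)"
    by (simp only: scaleR_diff_right sum_subtractf)
  also have "\<dots> = avg t k \<omega> - avg t 0 \<omega>"
    by (simp only: sum_p_const avg_def avg_iter_def)
  finally have "norm (avg t k \<omega> - avg t 0 \<omega>) = norm (\<Sum>i<C. p i *\<^sub>R (w i t k \<omega> - avg t 0 \<omega>))" by simp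
  also have "\<dots> \<le> (\<Sum>i<C. norm (p i *\<^sub>R (w i t k \<omega> - avg t 0 \<omega>)))" by (rule norm_sum)
  also have "\<dots> = rr t k \<omega>" unfolding rr_def by (intro sum.cong) (auto simp: sum_p_nonneg)
  finally show ?thesis .
qed

lemma rr_nonneg: "rr t k \<omega> \<ge> 0"
  unfolding rr_def by (intro sum_nonneg) (auto simp: sum_p_nonneg)

lemma nvm_le: "\<omega> \<in> space M \<Longrightarrow> norm (gFg (avg t k \<omega>) - mF t k \<omega>) \<le> 2 * L * rr t k \<omega>"
proof -
  assume om: "\<omega> \<in> space M"
  have "norm (gFg (avg t k \<omega>) - mF t k \<omega>) = norm (\<Sum>i<C. p i *\<^sub>R (gradF i (avg t k \<omega>) - gradF i (w i t k \<omega>)))"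
    unfolding gFg_def mF_def hF_def by (simp add: scaleR_diff_right sum_subtractf)
  also have "\<dots> \<le> (\<Sum>i<C. norm (p i *\<^sub>R (gradF i (avg t k \<omega>) - gradF i (w i t k \<omega>))))" by (rule norm_sum)
  also have "\<dots> \<le> (\<Sum>i<C. p i * (L * (norm (avg t k \<omega> - avg t 0 \<omega>) + norm (w i t k \<omega> - avg t 0 \<omega>))))"
  proof (rule sum_mono)
    fix i assume i: "i \<in> {..<C}"
    have "norm (avg t k \<omega> - w i t k \<omega>) \<le> norm (avg t k \<omega> - avg t 0 \<omega>) + norm (w i t k \<omega> - avg t 0 \<omega>)"
    proof -
      have "avg t k \<omega> - w i t k \<omega> = (avg t k \<omega> - avg t 0 \<omega>) - (w i t k \<omega> - avg t 0 \<omega>)" by simp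
      then show ?thesis using norm_triangle_ineq4[of "avg t k \<omega> - avg t 0 \<omega>" "w i t k \<omega> - avg t 0 \<omega>"] by simp
    qed
    then have "norm (gradF i (avg t k \<omega>) - gradF i (w i t k \<omega>)) \<le> L * (norm (avg t k \<omega> - avg t 0 \<omega>) + norm (w i t k \<omega> - avg t 0 \<omega>))"
      using order_trans[OF smooth[of i "avg t k \<omega>" "w i t k \<omega>"] mult_left_mono[OF _ L_nonneg]] i by simp
    then show "norm (p i *\<^sub>R (gradF i (avg t k \<omega>) - gradF i (w i t k \<omega>))) \<le> p i * (L * (norm (avg t k \<omega> - avg t 0 \<omega>) + norm (w i t k \<omega> - avg t 0 \<omega>)))"
      using i sum_p_nonneg by (simp add: mult_left_mono)
  qed
  also have "\<dots> = L * norm (avg t k \<omega> - avg t 0 \<omega>) + L * rr t k \<omega>"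
    unfolding rr_def by (simp add: distrib_left sum.distrib sum_distrib_left[symmetric] sum_distrib_right[symmetric] weights_sum mult_ac)
  also have "\<dots> \<le> 2 * L * rr t k \<omega>"
    using mult_left_mono[OF nD_le[OF om, of t k] L_nonneg] by simp
  finally show ?thesis .
qed

lemma rr_bound:
  assumes om: "\<omega> \<in> space M" and k: "k \<le> E"
  shows "(rr t k \<omega>)\<^sup>2 \<le> \<gamma>\<^sup>2 * real k * (\<Sum>j<k. \<Sum>i<C. p i * (norm (g i t j \<omega>))\<^sup>2)"
proof -
  define s where "s j = (\<Sum>i<C. p i * norm (g i t j \<omega>))" for j
  have "rr t k \<omega> \<le> (\<Sum>i<C. p i * (\<gamma> * (\<Sum>j<k. norm (g i t j \<omega>))))"
    unfolding rr_def using drift[OF om _ k] by (intro sum_mono mult_left_mono) (auto simp: sum_p_nonneg)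
  also have "\<dots> = \<gamma> * (\<Sum>j<k. s j)"
    unfolding s_def by (simp add: sum_distrib_left sum.swap[of _ "{..<C}"] mult_ac)
  finally have r1: "rr t k \<omega> \<le> \<gamma> * (\<Sum>j<k. s j)" .
  have "(rr t k \<omega>)\<^sup>2 \<le> (\<gamma> * (\<Sum>j<k. s j))\<^sup>2"
    using r1 rr_nonneg by (intro power_mono) auto
  also have "\<dots> = \<gamma>\<^sup>2 * (\<Sum>j<k. s j)\<^sup>2" by (simp add: power_mult_distrib)
  also have "\<dots> \<le> \<gamma>\<^sup>2 * ((\<Sum>j<k. (s j)\<^sup>2) * real k)"
    using sum_squared_le_sum_of_squares[of s "{..<k}"] by (intro mult_left_mono) auto
  also have "\<dots> \<le> \<gamma>\<^sup>2 * ((\<Sum>j<k. \<Sum>i<C. p i * (norm (g i t j \<omega>))\<^sup>2) * real k)"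
    unfolding s_def
    by (intro mult_left_mono mult_right_mono sum_mono weighted_sq_le) (auto simp: sum_p_nonneg weights_sum)
  finally show ?thesis by (simp add: mult_ac)
qed

lemma sqi_norm:
  fixes X :: "'m \<Rightarrow> 'b::euclidean_space"
  assumes X: "sqi M X" shows "sqi M (\<lambda>\<omega>. norm (X \<omega>))"
proof -
  have m: "(\<lambda>x::'b. norm x) \<in> borel_measurable borel" by simp
  have l: "norm (norm x - norm (0::'b)) \<le> 1 * norm (x - 0)" for x :: 'b by simp
  show ?thesis by (rule sqi_lip[OF m l X P])
qed

lemma rr_sqi: "k \<le> E \<Longrightarrow> sqi M (rr t k)"
proof -
  assume k: "k \<le> E"
  have "sqi M (\<lambda>\<omega>. p i *\<^sub>R norm (w i t k \<omega> - avg t 0 \<omega>))" if "i < C" for i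
    using k that by (intro sqi_scaleR sqi_norm sqi_diff w_sqi avg_sqi) auto
  then show ?thesis unfolding rr_def by (intro sqi_sum P) auto
qed

lemma rr_int:
  assumes k: "k \<le> E"
  shows "(\<integral>\<omega>. (rr t k \<omega>)\<^sup>2 \<partial>M) \<le> \<gamma>\<^sup>2 * (real k)\<^sup>2 * G\<^sup>2"
proof -
  have ig: "integrable M (\<lambda>\<omega>. p i * (norm (g i t j \<omega>))\<^sup>2)" if "i < C" "j < k" for i j
    using sqiD(2)[OF g_sqi[of i j t]] that k by simp
  have "(\<integral>\<omega>. (\<Sum>j<k. \<Sum>i<C. p i * (norm (g i t j \<omega>))\<^sup>2) \<partial>M) = (\<Sum>j<k. (\<integral>\<omega>. (\<Sum>i<C. p i * (norm (g i t j \<omega>))\<^sup>2) \<partial>M))"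
    by (rule Bochner_Integration.integral_sum) (auto intro!: Bochner_Integration.integrable_sum ig)
  also have "\<dots> = (\<Sum>j<k. \<Sum>i<C. (\<integral>\<omega>. p i * (norm (g i t j \<omega>))\<^sup>2 \<partial>M))"
    by (rule sum.cong[OF refl], rule Bochner_Integration.integral_sum, rule ig) auto
  also have "\<dots> = (\<Sum>j<k. \<Sum>i<C. p i * (\<integral>\<omega>. (norm (g i t j \<omega>))\<^sup>2 \<partial>M))"
    by simp
  finally have IE: "(\<integral>\<omega>. (\<Sum>j<k. \<Sum>i<C. p i * (norm (g i t j \<omega>))\<^sup>2) \<partial>M) = (\<Sum>j<k. \<Sum>i<C. p i * (\<integral>\<omega>. (norm (g i t j \<omega>))\<^sup>2 \<partial>M))" .
  have "(\<integral>\<omega>. (rr t k \<omega>)\<^sup>2 \<partial>M) \<le> (\<integral>\<omega>. \<gamma>\<^sup>2 * real k * (\<Sum>j<k. \<Sum>i<C. p i * (norm (g i t j \<omega>))\<^sup>2) \<partial>M)"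
  proof (rule integral_mono)
    show "integrable M (\<lambda>\<omega>. (rr t k \<omega>)\<^sup>2)" using sqiD(2)[OF rr_sqi[OF k]] by simp
    show "integrable M (\<lambda>\<omega>. \<gamma>\<^sup>2 * real k * (\<Sum>j<k. \<Sum>i<C. p i * (norm (g i t j \<omega>))\<^sup>2))"
      by (intro integrable_mult_right Bochner_Integration.integrable_sum ig) auto
    show "(rr t k \<omega>)\<^sup>2 \<le> \<gamma>\<^sup>2 * real k * (\<Sum>j<k. \<Sum>i<C. p i * (norm (g i t j \<omega>))\<^sup>2)" if "\<omega> \<in> space M" for \<omega>
      by (rule rr_bound[OF that k])
  qed
  also have "\<dots> = \<gamma>\<^sup>2 * real k * (\<Sum>j<k. \<Sum>i<C. p i * (\<integral>\<omega>. (norm (g i t j \<omega>))\<^sup>2 \<partial>M))"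
    using IE by simp
  also have "\<dots> \<le> \<gamma>\<^sup>2 * real k * (\<Sum>j<k. \<Sum>i<C. p i * G\<^sup>2)"
    using g_moment k gamma_pos
    by (intro mult_left_mono sum_mono) (auto simp: sum_p_nonneg)
  also have "\<dots> = \<gamma>\<^sup>2 * (real k)\<^sup>2 * G\<^sup>2"
    by (simp add: sum_distrib_right[symmetric] weights_sum power2_eq_square)
  finally show ?thesis .
qed

end

context fedprox
begin

definition Phi where "Phi t k \<omega> = gFg (avg t k \<omega>) \<bullet> (avg t (Suc k) \<omega> - avg t k \<omega>)
   + L / 2 * (norm (avg t (Suc k) \<omega> - avg t k \<omega>))\<^sup>2"

lemma step_bound:
  assumes k: "k < E"
  shows "(\<integral>\<omega>. Phi t k \<omega> \<partial>M) \<le> - \<gamma> / 4 * (\<integral>\<omega>. (norm (gFg (avg t k \<omega>)))\<^sup>2 \<partial>M)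
     + (\<alpha>\<^sup>2 * \<gamma> + L * \<alpha>\<^sup>2 * \<gamma>\<^sup>2 + 2 * \<gamma> * L\<^sup>2) * (\<gamma>\<^sup>2 * (real k)\<^sup>2 * G\<^sup>2)
     + L * \<gamma>\<^sup>2 / 2 * ((\<Sum>i<C. (p i)\<^sup>2) * \<sigma>\<^sup>2)"
proof -
  have kk: "k \<le> E" using k by simp
  define v where "v \<omega> = gFg (avg t k \<omega>)" for \<omega>
  define D where "D \<omega> = avg t k \<omega> - avg t 0 \<omega>" for \<omega>
  define m where "m \<omega> = mF t k \<omega>" for \<omega>
  define \<xi> where "\<xi> \<omega> = gbar t k \<omega> - mF t k \<omega>" for \<omega>
  define Y where "Y \<omega> = (\<alpha> * \<gamma>) *\<^sub>R D \<omega> + \<gamma> *\<^sub>R m \<omega>" for \<omega>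
  define Q where "Q \<omega> = - (v \<omega> \<bullet> Y \<omega>) + L / 2 * (norm (Y \<omega>))\<^sup>2" for \<omega>
  define c where "c = \<alpha>\<^sup>2 * \<gamma> + L * \<alpha>\<^sup>2 * \<gamma>\<^sup>2 + 2 * \<gamma> * L\<^sup>2"
  have sv: "sqi M v" unfolding v_def by (rule gFavg_sqi[OF kk])
  have sD: "sqi M D" unfolding D_def by (intro sqi_diff avg_sqi) (use kk in auto)
  have sm: "sqi M m" unfolding m_def by (rule mF_sqi[OF kk])
  have sxi: "sqi M \<xi>" unfolding \<xi>_def by (intro sqi_diff gbar_sqi mF_sqi k kk)
  have sY: "sqi M Y" unfolding Y_def by (intro sqi_add sqi_scaleR sD sm)
  have vN: "v \<in> borel_measurable (Filt t k)" unfolding v_def using avg_measF[OF k] gFg_meas by measurable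
  have YN: "Y \<in> borel_measurable (Filt t k)" unfolding Y_def D_def m_def
    using avg_measF[OF k] avg0_measF[OF k] mF_measF[OF k] by measurable
  have vxi: "(\<integral>\<omega>. v \<omega> \<bullet> \<xi> \<omega> \<partial>M) = 0"
  proof -
    have "(\<integral>\<omega>. v \<omega> \<bullet> \<xi> \<omega> \<partial>M) = (\<integral>\<omega>. v \<omega> \<bullet> gbar t k \<omega> - v \<omega> \<bullet> mF t k \<omega> \<partial>M)"
      unfolding \<xi>_def by (simp add: inner_diff_right)
    also have "\<dots> = (\<integral>\<omega>. v \<omega> \<bullet> gbar t k \<omega> \<partial>M) - (\<integral>\<omega>. v \<omega> \<bullet> mF t k \<omega> \<partial>M)"
      by (rule Bochner_Integration.integral_diff) (intro int_inner sv gbar_sqi mF_sqi k kk)+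
    also have "\<dots> = 0" using tower_gbar[OF k vN sv] by simp
    finally show ?thesis .
  qed
  have Yxi: "(\<integral>\<omega>. Y \<omega> \<bullet> \<xi> \<omega> \<partial>M) = 0"
  proof -
    have "(\<integral>\<omega>. Y \<omega> \<bullet> \<xi> \<omega> \<partial>M) = (\<integral>\<omega>. Y \<omega> \<bullet> gbar t k \<omega> - Y \<omega> \<bullet> mF t k \<omega> \<partial>M)"
      unfolding \<xi>_def by (simp add: inner_diff_right)
    also have "\<dots> = (\<integral>\<omega>. Y \<omega> \<bullet> gbar t k \<omega> \<partial>M) - (\<integral>\<omega>. Y \<omega> \<bullet> mF t k \<omega> \<partial>M)"
      by (rule Bochner_Integration.integral_diff) (intro int_inner sY gbar_sqi mF_sqi k kk)+
    also have "\<dots> = 0" using tower_gbar[OF k YN sY] by simp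
    finally show ?thesis .
  qed
  have Phi_pw: "Phi t k \<omega> = Q \<omega> - \<gamma> * (v \<omega> \<bullet> \<xi> \<omega>) + L * \<gamma> * (Y \<omega> \<bullet> \<xi> \<omega>) + L * \<gamma>\<^sup>2 / 2 * (norm (\<xi> \<omega>))\<^sup>2"
    if om: "\<omega> \<in> space M" for \<omega>
  proof -
    have d: "avg t (Suc k) \<omega> - avg t k \<omega> = - Y \<omega> - \<gamma> *\<^sub>R \<xi> \<omega>"
      unfolding Y_def D_def m_def \<xi>_def avg_step[OF k om] by (simp add: algebra_simps)
    have n: "(norm (- Y \<omega> - \<gamma> *\<^sub>R \<xi> \<omega>))\<^sup>2 = (norm (Y \<omega>))\<^sup>2 + 2 * \<gamma> * (Y \<omega> \<bullet> \<xi> \<omega>) + \<gamma>\<^sup>2 * (norm (\<xi> \<omega>))\<^sup>2"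
      unfolding power2_norm_eq_inner
      by (simp add: inner_diff_left inner_diff_right inner_commute power2_eq_square algebra_simps)
    show ?thesis unfolding Phi_def d n Q_def v_def[symmetric]
      by (simp add: inner_diff_right algebra_simps power2_eq_square)
  qed
  have iQ: "integrable M Q" unfolding Q_def
    by (intro Bochner_Integration.integrable_add integrable_minus integrable_mult_right int_inner sv sY sqiD(2)[OF sY])
  have ivxi: "integrable M (\<lambda>\<omega>. v \<omega> \<bullet> \<xi> \<omega>)" by (rule int_inner[OF sv sxi])
  have iYxi: "integrable M (\<lambda>\<omega>. Y \<omega> \<bullet> \<xi> \<omega>)" by (rule int_inner[OF sY sxi])
  have ixi: "integrable M (\<lambda>\<omega>. (norm (\<xi> \<omega>))\<^sup>2)" by (rule sqiD(2)[OF sxi])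
  have "(\<integral>\<omega>. Phi t k \<omega> \<partial>M) = (\<integral>\<omega>. Q \<omega> - \<gamma> * (v \<omega> \<bullet> \<xi> \<omega>) + L * \<gamma> * (Y \<omega> \<bullet> \<xi> \<omega>) + L * \<gamma>\<^sup>2 / 2 * (norm (\<xi> \<omega>))\<^sup>2 \<partial>M)"
    by (rule Bochner_Integration.integral_cong[OF refl Phi_pw])
  also have "\<dots> = (\<integral>\<omega>. Q \<omega> \<partial>M) - \<gamma> * (\<integral>\<omega>. v \<omega> \<bullet> \<xi> \<omega> \<partial>M) + L * \<gamma> * (\<integral>\<omega>. Y \<omega> \<bullet> \<xi> \<omega> \<partial>M)
      + L * \<gamma>\<^sup>2 / 2 * (\<integral>\<omega>. (norm (\<xi> \<omega>))\<^sup>2 \<partial>M)"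
    using iQ ivxi iYxi ixi by simp
  also have "\<dots> = (\<integral>\<omega>. Q \<omega> \<partial>M) + L * \<gamma>\<^sup>2 / 2 * (\<integral>\<omega>. (norm (\<xi> \<omega>))\<^sup>2 \<partial>M)"
    using vxi Yxi by simp
  finally have I1: "(\<integral>\<omega>. Phi t k \<omega> \<partial>M) = (\<integral>\<omega>. Q \<omega> \<partial>M) + L * \<gamma>\<^sup>2 / 2 * (\<integral>\<omega>. (norm (\<xi> \<omega>))\<^sup>2 \<partial>M)" .
  have Qpw: "Q \<omega> \<le> - \<gamma> / 4 * (norm (v \<omega>))\<^sup>2 + c * (rr t k \<omega>)\<^sup>2" if om: "\<omega> \<in> space M" for \<omega>
  proof -
    have "Q \<omega> \<le> - \<gamma> / 4 * (norm (v \<omega>))\<^sup>2 + (\<alpha>\<^sup>2 * \<gamma> + L * \<alpha>\<^sup>2 * \<gamma>\<^sup>2) * (norm (D \<omega>))\<^sup>2 + \<gamma> / 2 * (norm (v \<omega> - m \<omega>))\<^sup>2"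
      unfolding Q_def Y_def by (rule alg_step[OF alpha_pos less_imp_le[OF gamma_pos] L_nonneg Lg])
    also have "(\<alpha>\<^sup>2 * \<gamma> + L * \<alpha>\<^sup>2 * \<gamma>\<^sup>2) * (norm (D \<omega>))\<^sup>2 \<le> (\<alpha>\<^sup>2 * \<gamma> + L * \<alpha>\<^sup>2 * \<gamma>\<^sup>2) * (rr t k \<omega>)\<^sup>2"
      using nD_le[OF om, of t k] gamma_pos L_nonneg unfolding D_def
      by (intro mult_left_mono power_mono) auto
    also have "\<gamma> / 2 * (norm (v \<omega> - m \<omega>))\<^sup>2 \<le> \<gamma> / 2 * (2 * L * rr t k \<omega>)\<^sup>2"
      using nvm_le[OF om, of t k] gamma_pos unfolding v_def m_def
      by (intro mult_left_mono power_mono) auto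
    finally show ?thesis unfolding c_def by (simp add: power_mult_distrib algebra_simps)
  qed
  have c_nonneg: "c \<ge> 0" unfolding c_def using gamma_pos L_nonneg by simp
  have "(\<integral>\<omega>. Q \<omega> \<partial>M) \<le> (\<integral>\<omega>. - \<gamma> / 4 * (norm (v \<omega>))\<^sup>2 + c * (rr t k \<omega>)\<^sup>2 \<partial>M)"
    by (rule integral_mono[OF iQ _ Qpw])
       (intro Bochner_Integration.integrable_add integrable_mult_right sqiD(2)[OF sv] sqiD(2)[OF rr_sqi[OF kk], simplified])
  also have "\<dots> = - \<gamma> / 4 * (\<integral>\<omega>. (norm (v \<omega>))\<^sup>2 \<partial>M) + c * (\<integral>\<omega>. (rr t k \<omega>)\<^sup>2 \<partial>M)"
    using sqiD(2)[OF sv] sqiD(2)[OF rr_sqi[OF kk]] by simp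
  also have "\<dots> \<le> - \<gamma> / 4 * (\<integral>\<omega>. (norm (v \<omega>))\<^sup>2 \<partial>M) + c * (\<gamma>\<^sup>2 * (real k)\<^sup>2 * G\<^sup>2)"
    using rr_int[OF kk, of t] c_nonneg by (intro add_left_mono mult_left_mono) auto
  finally have I2: "(\<integral>\<omega>. Q \<omega> \<partial>M) \<le> - \<gamma> / 4 * (\<integral>\<omega>. (norm (v \<omega>))\<^sup>2 \<partial>M) + c * (\<gamma>\<^sup>2 * (real k)\<^sup>2 * G\<^sup>2)" .
  have I3: "L * \<gamma>\<^sup>2 / 2 * (\<integral>\<omega>. (norm (\<xi> \<omega>))\<^sup>2 \<partial>M) \<le> L * \<gamma>\<^sup>2 / 2 * ((\<Sum>i<C. (p i)\<^sup>2) * \<sigma>\<^sup>2)"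
    unfolding \<xi>_def using noise[OF k, of t] L_nonneg by (intro mult_left_mono) auto
  show ?thesis using I1 I2 I3 unfolding c_def v_def by linarith
qed

end

lemma sum_sq_le: "3 * (\<Sum>k<n. (real k)\<^sup>2) \<le> (real n) ^ 3"
proof (induction n)
  case 0 then show ?case by simp
next
  case (Suc n)
  have "3 * (\<Sum>k<Suc n. (real k)\<^sup>2) = 3 * (\<Sum>k<n. (real k)\<^sup>2) + 3 * (real n)\<^sup>2" by simp
  also have "\<dots> \<le> (real n) ^ 3 + 3 * (real n)\<^sup>2" using Suc by simp
  also have "\<dots> \<le> (real (Suc n)) ^ 3" by (simp add: power3_eq_cube power2_eq_square algebra_simps)
  finally show ?case .
qed

lemma final_arith:
  fixes a l s e D G2 V S X \<gamma> :: real
  assumes a: "a > 0" and l: "l \<ge> 0" and s: "s \<ge> 1" and e: "e \<ge> 1" and G2: "G2 \<ge> 0" and V: "V \<ge> 0" and S: "S \<ge> 0"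
    and g: "\<gamma> = 1 / (2 * (a + l) * (s * e))"
    and H: "\<gamma> / 4 * X \<le> D + s\<^sup>2 * ((a\<^sup>2 * \<gamma> + l * a\<^sup>2 * \<gamma>\<^sup>2 + 2 * \<gamma> * l\<^sup>2) * \<gamma>\<^sup>2 * G2 * (e\<^sup>2)^3 / 3)
       + s\<^sup>2 * e\<^sup>2 * (l * \<gamma>\<^sup>2 / 2 * (S * V))"
  shows "1 / (s\<^sup>2 * e\<^sup>2) * X \<le> 1 / s * (8 * (a + l) * D / e + l * S * V / ((a + l) * e) + a * (e\<^sup>2 * e) * G2 / (a + l))
     + 2 * l\<^sup>2 * e\<^sup>2 * G2 / ((a + l)\<^sup>2 * s\<^sup>2) + a\<^sup>2 * l * e * G2 / (16 * (a + l) ^ 3 * (s\<^sup>2 * s))"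
proof -
  define La where "La = a + l"
  define K where "K = s * e"
  have La: "La > 0" "a \<le> La" "l \<le> La" using a l by (auto simp: La_def)
  have K: "K \<ge> 1" unfolding K_def using s e mult_mono[of 1 s 1 e] by simp
  have g': "\<gamma> = 1 / (2 * La * K)" using g by (simp add: La_def K_def)
  have "2 * La * K > 0" using La K by simp
  then have gp: "\<gamma> > 0" using g' by simp
  have gK: "\<gamma> * K = 1 / (2 * La)" using g' K La by simp
  have lg: "l * \<gamma> \<le> 1/2"
  proof -
    have "l * \<gamma> = l / (2 * La * K)" using g by (simp add: La_def K_def)
    also have "\<dots> \<le> La / (2 * La * 1)" using La K l by (intro frac_le mult_left_mono) auto
    finally show ?thesis using La by simp
  qed
  define c where "c = a\<^sup>2 * \<gamma> + l * a\<^sup>2 * \<gamma>\<^sup>2 + 2 * \<gamma> * l\<^sup>2"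
  define B where "B = s\<^sup>2 * (c * \<gamma>\<^sup>2 * G2 * (e\<^sup>2)^3 / 3)"
  define Cc where "Cc = s\<^sup>2 * e\<^sup>2 * (l * \<gamma>\<^sup>2 / 2 * (S * V))"
  have X: "X \<le> 4 / \<gamma> * (D + B + Cc)"
    using H gp unfolding B_def Cc_def c_def by (simp add: field_simps)
  have "1 / (s\<^sup>2 * e\<^sup>2) * X \<le> 1 / (s\<^sup>2 * e\<^sup>2) * (4 / \<gamma> * (D + B + Cc))"
    using X s e by (intro mult_left_mono) auto
  also have "\<dots> = 4 * D / (\<gamma> * K\<^sup>2) + 4 * B / (\<gamma> * K\<^sup>2) + 4 * Cc / (\<gamma> * K\<^sup>2)"
    unfolding K_def by (simp add: field_simps power_mult_distrib add_divide_distrib)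
  also have "4 * D / (\<gamma> * K\<^sup>2) = 1 / s * (8 * (a + l) * D / e)"
  proof -
    have "4 * D / (\<gamma> * K\<^sup>2) = 4 * D / ((\<gamma> * K) * K)" by (simp add: power2_eq_square mult.assoc)
    also have "\<dots> = 8 * La * D / K" unfolding gK using La K by (simp add: field_simps)
    also have "\<dots> = 1 / s * (8 * (a + l) * D / e)" unfolding K_def La_def using s e by (simp add: field_simps)
    finally show ?thesis .
  qed
  also have "4 * Cc / (\<gamma> * K\<^sup>2) = 1 / s * (l * S * V / ((a + l) * e))"
  proof -
    have "4 * Cc / (\<gamma> * K\<^sup>2) = 2 * l * (S * V) * (\<gamma> * K) / K"
      unfolding Cc_def K_def using gp s e by (simp add: field_simps power2_eq_square)
    also have "\<dots> = l * (S * V) / (La * K)" unfolding gK using La K by (simp add: field_simps)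
    also have "\<dots> = 1 / s * (l * S * V / ((a + l) * e))" unfolding K_def La_def using s e by (simp add: field_simps)
    finally show ?thesis .
  qed
  also have "4 * B / (\<gamma> * K\<^sup>2) = 4 / 3 * c * \<gamma> * G2 * e^4"
  proof -
    have e6: "(e\<^sup>2)^3 = e\<^sup>2 * e^4" by (simp add: power_mult[symmetric] power_add[symmetric])
    show ?thesis using gp s e unfolding K_def B_def e6 by (simp add: field_simps power2_eq_square)
  qed
  finally have X2: "1 / (s\<^sup>2 * e\<^sup>2) * X \<le> 1 / s * (8 * (a + l) * D / e) + 4 / 3 * c * \<gamma> * G2 * e^4 + 1 / s * (l * S * V / ((a + l) * e))" .
  have cg: "c * \<gamma> \<le> \<gamma>\<^sup>2 * (3/2 * a\<^sup>2 + 2 * l\<^sup>2)"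
  proof -
    have "c * \<gamma> = \<gamma>\<^sup>2 * (a\<^sup>2 * (1 + l * \<gamma>) + 2 * l\<^sup>2)" unfolding c_def by (simp add: power2_eq_square algebra_simps)
    also have "\<dots> \<le> \<gamma>\<^sup>2 * (3/2 * a\<^sup>2 + 2 * l\<^sup>2)" 
    proof -
      have "a\<^sup>2 * (1 + l * \<gamma>) \<le> a\<^sup>2 * (3/2)" using lg by (intro mult_left_mono) auto
      then show ?thesis by (intro mult_left_mono add_right_mono) auto
    qed
    finally show ?thesis .
  qed
  have g2e: "\<gamma>\<^sup>2 * e^4 = e\<^sup>2 / (4 * La\<^sup>2 * s\<^sup>2)"
  proof -
    have e4: "e^4 = e*(e*(e*e))" by (simp add: eval_nat_numeral)
    have "\<gamma>\<^sup>2 * e^4 = (\<gamma> * K)\<^sup>2 * e\<^sup>2 / s\<^sup>2" unfolding K_def e4 using s e by (simp add: field_simps power2_eq_square)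
    also have "\<dots> = e\<^sup>2 / (4 * La\<^sup>2 * s\<^sup>2)" unfolding gK using La s by (simp add: field_simps power2_eq_square)
    finally show ?thesis .
  qed
  have "4 / 3 * c * \<gamma> * G2 * e^4 \<le> 4 / 3 * (\<gamma>\<^sup>2 * (3/2 * a\<^sup>2 + 2 * l\<^sup>2)) * G2 * e^4"
  proof -
    have "4/3 * (c * \<gamma>) * (G2 * e^4) \<le> 4/3 * (\<gamma>\<^sup>2 * (3/2 * a\<^sup>2 + 2 * l\<^sup>2)) * (G2 * e^4)"
      using cg G2 by (intro mult_right_mono mult_left_mono) auto
    then show ?thesis by (simp add: mult.assoc)
  qed
  also have "\<dots> = a\<^sup>2 * G2 * e\<^sup>2 / (2 * La\<^sup>2 * s\<^sup>2) + 2 / 3 * (l\<^sup>2 * e\<^sup>2 * G2 / (La\<^sup>2 * s\<^sup>2))"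
  proof -
    have "4 / 3 * (\<gamma>\<^sup>2 * (3/2 * a\<^sup>2 + 2 * l\<^sup>2)) * G2 * e^4 = 4 / 3 * (3/2 * a\<^sup>2 + 2 * l\<^sup>2) * G2 * (\<gamma>\<^sup>2 * e^4)"
      by (simp add: mult_ac)
    also have "\<dots> = 4 / 3 * (3/2 * a\<^sup>2 + 2 * l\<^sup>2) * G2 * (e\<^sup>2 / (4 * La\<^sup>2 * s\<^sup>2))" by (simp only: g2e)
    also have "\<dots> = a\<^sup>2 * G2 * e\<^sup>2 / (2 * La\<^sup>2 * s\<^sup>2) + 2 / 3 * (l\<^sup>2 * e\<^sup>2 * G2 / (La\<^sup>2 * s\<^sup>2))"
      using La s by (simp add: field_simps)
    finally show ?thesis .
  qed
  also have "a\<^sup>2 * G2 * e\<^sup>2 / (2 * La\<^sup>2 * s\<^sup>2) \<le> 1 / s * (a * (e\<^sup>2 * e) * G2 / La)"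
  proof -
    have "a \<le> 2 * e * La * s"
    proof -
      have "1 \<le> 2 * (e * s)" using K unfolding K_def by (simp add: mult.commute)
      then have h: "La * 1 \<le> La * (2 * (e * s))" using La by (intro mult_left_mono) auto
      have "2 * e * La * s = La * (2 * (e * s))" by (simp add: mult_ac)
      then show ?thesis using h La by linarith
    qed
    then have "a * (a * G2 * e\<^sup>2) \<le> (2 * e * La * s) * (a * G2 * e\<^sup>2)"
      using a G2 by (intro mult_right_mono) auto
    then show ?thesis using La s a by (simp add: field_simps power2_eq_square)
  qed
  also have "2 / 3 * (l\<^sup>2 * e\<^sup>2 * G2 / (La\<^sup>2 * s\<^sup>2)) \<le> 2 * l\<^sup>2 * e\<^sup>2 * G2 / ((a + l)\<^sup>2 * s\<^sup>2)"
  proof -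
    define q where "q = l\<^sup>2 * e\<^sup>2 * G2 / (La\<^sup>2 * s\<^sup>2)"
    have q0: "0 \<le> q" using G2 unfolding q_def by simp
    have r: "2 * l\<^sup>2 * e\<^sup>2 * G2 / ((a + l)\<^sup>2 * s\<^sup>2) = 2 * q"
      unfolding La_def q_def by simp
    show ?thesis unfolding r q_def[symmetric] using q0 by linarith
  qed
  finally have B2: "4 / 3 * c * \<gamma> * G2 * e^4 \<le> 1 / s * (a * (e\<^sup>2 * e) * G2 / (a + l)) + 2 * l\<^sup>2 * e\<^sup>2 * G2 / ((a + l)\<^sup>2 * s\<^sup>2)"
    unfolding La_def by simp
  have last: "0 \<le> a\<^sup>2 * l * e * G2 / (16 * (a + l) ^ 3 * (s\<^sup>2 * s))"
    using a l e G2 s by simp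
  have split: "1 / s * (8 * (a + l) * D / e + l * S * V / ((a + l) * e) + a * (e\<^sup>2 * e) * G2 / (a + l))
     = 1 / s * (8 * (a + l) * D / e) + 1 / s * (l * S * V / ((a + l) * e)) + 1 / s * (a * (e\<^sup>2 * e) * G2 / (a + l))"
    by (simp add: distrib_left)
  show ?thesis using X2 B2 last unfolding split by linarith
qed


context fedprox
begin

lemma Phi_int: "k < E \<Longrightarrow> integrable M (Phi t k)"
proof -
  assume k: "k < E"
  have sd: "sqi M (\<lambda>\<omega>. avg t (Suc k) \<omega> - avg t k \<omega>)" using k by (intro sqi_diff avg_sqi) auto
  show ?thesis unfolding Phi_def
    using k by (intro Bochner_Integration.integrable_add integrable_mult_right int_inner gFavg_sqi sd sqiD(2)[OF sd]) auto
qed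

lemma tele_pw:
  assumes om: "\<omega> \<in> space M"
  shows "f_inf - Fg w0 \<le> (\<Sum>t<T. \<Sum>k<E. Phi t k \<omega>)"
proof -
  have st: "Fg (avg t (Suc k) \<omega>) - Fg (avg t k \<omega>) \<le> Phi t k \<omega>" for t k
    using Fg_descent[of "avg t (Suc k) \<omega>" "avg t k \<omega>"] unfolding Phi_def by simp
  have r: "Fg (avg (Suc t) 0 \<omega>) - Fg (avg t 0 \<omega>) \<le> (\<Sum>k<E. Phi t k \<omega>)" for t
  proof -
    have "Fg (avg (Suc t) 0 \<omega>) - Fg (avg t 0 \<omega>) = (\<Sum>k<E. Fg (avg t (Suc k) \<omega>) - Fg (avg t k \<omega>))"
      using sum_lessThan_telescope[of "\<lambda>k. Fg (avg t k \<omega>)" E] avg_Suc0[OF om] by simp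
    also have "\<dots> \<le> (\<Sum>k<E. Phi t k \<omega>)" by (rule sum_mono) (rule st)
    finally show ?thesis .
  qed
  have "Fg (avg T 0 \<omega>) - Fg (avg 0 0 \<omega>) = (\<Sum>t<T. Fg (avg (Suc t) 0 \<omega>) - Fg (avg t 0 \<omega>))"
    using sum_lessThan_telescope[of "\<lambda>t. Fg (avg t 0 \<omega>)" T] by simp
  also have "\<dots> \<le> (\<Sum>t<T. \<Sum>k<E. Phi t k \<omega>)" by (rule sum_mono) (rule r)
  finally have "Fg (avg T 0 \<omega>) - Fg w0 \<le> (\<Sum>t<T. \<Sum>k<E. Phi t k \<omega>)" using avg_00[OF om] by simp
  moreover have "f_inf \<le> Fg (avg T 0 \<omega>)" unfolding Fg_def by (rule lower)
  ultimately show ?thesis by linarith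
qed

lemma tele: "f_inf - Fg w0 \<le> (\<Sum>t<T. \<Sum>k<E. (\<integral>\<omega>. Phi t k \<omega> \<partial>M))"
proof -
  have "f_inf - Fg w0 = (\<integral>\<omega>. f_inf - Fg w0 \<partial>M)"
    using prob_space.prob_space[OF P] by simp
  also have "\<dots> \<le> (\<integral>\<omega>. (\<Sum>t<T. \<Sum>k<E. Phi t k \<omega>) \<partial>M)"
    by (rule integral_mono)
       (auto intro!: Bochner_Integration.integrable_sum Phi_int tele_pw prob_space.finite_measure[OF P]
          finite_measure.integrable_const)
  also have "\<dots> = (\<Sum>t<T. (\<integral>\<omega>. (\<Sum>k<E. Phi t k \<omega>) \<partial>M))"
    by (rule Bochner_Integration.integral_sum) (auto intro!: Bochner_Integration.integrable_sum Phi_int)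
  also have "\<dots> = (\<Sum>t<T. \<Sum>k<E. (\<integral>\<omega>. Phi t k \<omega> \<partial>M))"
    by (rule sum.cong[OF refl], rule Bochner_Integration.integral_sum, rule Phi_int) auto
  finally show ?thesis .
qed

definition Ig where "Ig t k = (\<integral>\<omega>. (norm (gFg (avg t k \<omega>)))\<^sup>2 \<partial>M)"

lemma Ig_nonneg: "Ig t k \<ge> 0" unfolding Ig_def by simp

lemma sum_bound:
  defines "c \<equiv> \<alpha>\<^sup>2 * \<gamma> + L * \<alpha>\<^sup>2 * \<gamma>\<^sup>2 + 2 * \<gamma> * L\<^sup>2"
  shows "\<gamma> / 4 * (\<Sum>t<T. \<Sum>k<E. Ig t k) \<le> (Fg w0 - f_inf) + real T * (c * \<gamma>\<^sup>2 * G\<^sup>2 * (real E)^3 / 3)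
     + real T * real E * (L * \<gamma>\<^sup>2 / 2 * ((\<Sum>i<C. (p i)\<^sup>2) * \<sigma>\<^sup>2))"
proof -
  have c0: "c \<ge> 0" unfolding c_def using gamma_pos L_nonneg by simp
  have "f_inf - Fg w0 \<le> (\<Sum>t<T. \<Sum>k<E. (- \<gamma> / 4 * Ig t k + c * (\<gamma>\<^sup>2 * (real k)\<^sup>2 * G\<^sup>2)
     + L * \<gamma>\<^sup>2 / 2 * ((\<Sum>i<C. (p i)\<^sup>2) * \<sigma>\<^sup>2)))"
  proof -
    have "(\<Sum>t<T. \<Sum>k<E. (\<integral>\<omega>. Phi t k \<omega> \<partial>M)) \<le> (\<Sum>t<T. \<Sum>k<E. (- \<gamma> / 4 * Ig t k + c * (\<gamma>\<^sup>2 * (real k)\<^sup>2 * G\<^sup>2)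
     + L * \<gamma>\<^sup>2 / 2 * ((\<Sum>i<C. (p i)\<^sup>2) * \<sigma>\<^sup>2)))"
      unfolding c_def Ig_def by (intro sum_mono step_bound) auto
    then show ?thesis using tele by linarith
  qed
  also have "\<dots> = - \<gamma> / 4 * (\<Sum>t<T. \<Sum>k<E. Ig t k) + (\<Sum>t<T. c * \<gamma>\<^sup>2 * G\<^sup>2 * (\<Sum>k<E. (real k)\<^sup>2))
     + real T * real E * (L * \<gamma>\<^sup>2 / 2 * ((\<Sum>i<C. (p i)\<^sup>2) * \<sigma>\<^sup>2))"
  proof -
    have e1: "(\<Sum>t<T. \<Sum>k<E. - \<gamma> / 4 * Ig t k) = - \<gamma> / 4 * (\<Sum>t<T. \<Sum>k<E. Ig t k)"
      by (simp add: sum_distrib_left)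
    have e2: "(\<Sum>t<T. \<Sum>k<E. c * (\<gamma>\<^sup>2 * (real k)\<^sup>2 * G\<^sup>2)) = (\<Sum>t<T. c * \<gamma>\<^sup>2 * G\<^sup>2 * (\<Sum>k<E. (real k)\<^sup>2))"
      by (simp add: sum_distrib_left mult_ac)
    have e3: "(\<Sum>t<T. \<Sum>k<E. L * \<gamma>\<^sup>2 / 2 * ((\<Sum>i<C. (p i)\<^sup>2) * \<sigma>\<^sup>2)) = real T * real E * (L * \<gamma>\<^sup>2 / 2 * ((\<Sum>i<C. (p i)\<^sup>2) * \<sigma>\<^sup>2))"
      by simp
    show ?thesis by (simp only: sum.distrib e1 e2 e3)
  qed
  also have "(\<Sum>t<T. c * \<gamma>\<^sup>2 * G\<^sup>2 * (\<Sum>k<E. (real k)\<^sup>2)) \<le> real T * (c * \<gamma>\<^sup>2 * G\<^sup>2 * (real E)^3 / 3)"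
  proof -
    have "c * \<gamma>\<^sup>2 * G\<^sup>2 * (\<Sum>k<E. (real k)\<^sup>2) \<le> c * \<gamma>\<^sup>2 * G\<^sup>2 * ((real E)^3 / 3)"
      using sum_sq_le[of E] c0 by (intro mult_left_mono) auto
    then have "real T * (c * \<gamma>\<^sup>2 * G\<^sup>2 * (\<Sum>k<E. (real k)\<^sup>2)) \<le> real T * (c * \<gamma>\<^sup>2 * G\<^sup>2 * ((real E)^3 / 3))"
      by (rule mult_left_mono) auto
    then show ?thesis by simp
  qed
  finally have fin: "f_inf - Fg w0 \<le> - \<gamma> / 4 * (\<Sum>t<T. \<Sum>k<E. Ig t k) + real T * (c * \<gamma>\<^sup>2 * G\<^sup>2 * (real E)^3 / 3)
     + real T * real E * (L * \<gamma>\<^sup>2 / 2 * ((\<Sum>i<C. (p i)\<^sup>2) * \<sigma>\<^sup>2))" by simp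
  have "- \<gamma> / 4 * (\<Sum>t<T. \<Sum>k<E. Ig t k) = - (\<gamma> / 4 * (\<Sum>t<T. \<Sum>k<E. Ig t k))" by simp
  then show ?thesis using fin by linarith
qed

lemma powr32: "x \<ge> 0 \<Longrightarrow> x powr (3/2) = (sqrt x)\<^sup>2 * sqrt x"
proof -
  assume x: "x \<ge> 0"
  show ?thesis
  proof (cases "x = 0")
    case True then show ?thesis by simp
  next
    case False
    then have "x powr (3/2) = x powr (1 + 1/2)" by simp
    also have "\<dots> = x powr 1 * x powr (1/2)" by (rule powr_add)
    also have "\<dots> = x * x powr (1/2)" using x by simp
    also have "\<dots> = (sqrt x)\<^sup>2 * sqrt x" using x by (simp add: powr_half_sqrt)
    finally show ?thesis .
  qed
qed

theorem main:
  "ennreal (1 / (real T * real E)) *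
           (\<Sum>t<T. \<Sum>k<E. \<integral>\<^sup>+ \<omega>. ennreal ((norm (\<Sum>i<C. p i *\<^sub>R gradF i (avg_iter C p w t k \<omega>)))\<^sup>2) \<partial>M)
         \<le> ennreal (
             1 / sqrt (real T) *
               (8 * (\<alpha> + L) * ((\<Sum>i<C. p i * F i w0) - f_inf) / sqrt (real E)
                + L * (\<Sum>i<C. (p i)\<^sup>2) * \<sigma>\<^sup>2 / ((\<alpha> + L) * sqrt (real E))
                + \<alpha> * real E powr (3/2) * G\<^sup>2 / (\<alpha> + L))
             + 2 * L\<^sup>2 * real E * G\<^sup>2 / ((\<alpha> + L)\<^sup>2 * real T)
             + \<alpha>\<^sup>2 * L * sqrt (real E) * G\<^sup>2 / (16 * (\<alpha> + L) ^ 3 * real T powr (3/2)))"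
proof -
  define s where "s = sqrt (real T)"
  define e where "e = sqrt (real E)"
  have s1: "s \<ge> 1" unfolding s_def using T_ge by simp
  have e1: "e \<ge> 1" unfolding e_def using E_ge by simp
  have Ts: "real T = s\<^sup>2" unfolding s_def by simp
  have Ee: "real E = e\<^sup>2" unfolding e_def by simp
  have nn: "(\<integral>\<^sup>+ \<omega>. ennreal ((norm (\<Sum>i<C. p i *\<^sub>R gradF i (avg_iter C p w t k \<omega>)))\<^sup>2) \<partial>M) = ennreal (Ig t k)"
    if "k < E" for t k
  proof -
    have "(\<integral>\<^sup>+ \<omega>. ennreal ((norm (\<Sum>i<C. p i *\<^sub>R gradF i (avg_iter C p w t k \<omega>)))\<^sup>2) \<partial>M)
        = (\<integral>\<^sup>+ \<omega>. ennreal ((norm (gFg (avg t k \<omega>)))\<^sup>2) \<partial>M)"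
      by (simp add: gFg_def avg_def)
    also have "\<dots> = ennreal (Ig t k)" unfolding Ig_def
      by (rule nn_integral_eq_integral) (use sqiD(2)[OF gFavg_sqi] that in auto)
    finally show ?thesis .
  qed
  define X where "X = (\<Sum>t<T. \<Sum>k<E. Ig t k)"
  have X0: "X \<ge> 0" unfolding X_def by (intro sum_nonneg Ig_nonneg)
  have lhs: "ennreal (1 / (real T * real E)) *
           (\<Sum>t<T. \<Sum>k<E. \<integral>\<^sup>+ \<omega>. ennreal ((norm (\<Sum>i<C. p i *\<^sub>R gradF i (avg_iter C p w t k \<omega>)))\<^sup>2) \<partial>M)
        = ennreal (1 / (s\<^sup>2 * e\<^sup>2) * X)"
  proof -
    have "(\<Sum>t<T. \<Sum>k<E. \<integral>\<^sup>+ \<omega>. ennreal ((norm (\<Sum>i<C. p i *\<^sub>R gradF i (avg_iter C p w t k \<omega>)))\<^sup>2) \<partial>M)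
        = (\<Sum>t<T. \<Sum>k<E. ennreal (Ig t k))" using nn by simp
    also have "\<dots> = ennreal X" unfolding X_def
      by (simp add: Ig_nonneg sum_nonneg)
    moreover have "ennreal (1 / (s\<^sup>2 * e\<^sup>2)) * ennreal X = ennreal (1 / (s\<^sup>2 * e\<^sup>2) * X)"
      by (rule ennreal_mult[symmetric]) (use X0 in auto)
    ultimately show ?thesis using Ts Ee by simp
  qed
  have g: "\<gamma> = 1 / (2 * (\<alpha> + L) * (s * e))" unfolding step s_def e_def by (simp add: real_sqrt_mult)
  have H: "\<gamma> / 4 * X \<le> (Fg w0 - f_inf) + s\<^sup>2 * ((\<alpha>\<^sup>2 * \<gamma> + L * \<alpha>\<^sup>2 * \<gamma>\<^sup>2 + 2 * \<gamma> * L\<^sup>2) * \<gamma>\<^sup>2 * G\<^sup>2 * (e\<^sup>2)^3 / 3)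
       + s\<^sup>2 * e\<^sup>2 * (L * \<gamma>\<^sup>2 / 2 * ((\<Sum>i<C. (p i)\<^sup>2) * \<sigma>\<^sup>2))"
    using sum_bound unfolding X_def Ts Ee by simp
  have A: "1 / (s\<^sup>2 * e\<^sup>2) * X \<le> 1 / s * (8 * (\<alpha> + L) * (Fg w0 - f_inf) / e + L * (\<Sum>i<C. (p i)\<^sup>2) * \<sigma>\<^sup>2 / ((\<alpha> + L) * e)
       + \<alpha> * (e\<^sup>2 * e) * G\<^sup>2 / (\<alpha> + L))
     + 2 * L\<^sup>2 * e\<^sup>2 * G\<^sup>2 / ((\<alpha> + L)\<^sup>2 * s\<^sup>2) + \<alpha>\<^sup>2 * L * e * G\<^sup>2 / (16 * (\<alpha> + L) ^ 3 * (s\<^sup>2 * s))"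
    by (rule final_arith[OF alpha_pos L_nonneg s1 e1 _ _ _ g H]) (auto intro: sum_nonneg)
  have pE: "real E powr (3/2) = e\<^sup>2 * e" unfolding e_def by (rule powr32) simp
  have pT: "real T powr (3/2) = s\<^sup>2 * s" unfolding s_def by (rule powr32) simp
  show ?thesis unfolding lhs
    apply (rule ennreal_leI)
    using A unfolding pE pT Fg_def s_def[symmetric] e_def[symmetric] Ts[symmetric] Ee[symmetric]
    by simp
qed

end

theorem theorem2:
  fixes M :: "'m measure"
    and Filt :: "nat \<Rightarrow> nat \<Rightarrow> 'm measure"
    and C E T :: nat
    and p :: "nat \<Rightarrow> real"
    and F :: "nat \<Rightarrow> 'a::euclidean_space \<Rightarrow> real"
    and gradF :: "nat \<Rightarrow> 'a \<Rightarrow> 'a"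
    and w g :: "nat \<Rightarrow> nat \<Rightarrow> nat \<Rightarrow> 'm \<Rightarrow> 'a"
    and w0 :: 'a
    and \<alpha> \<gamma> L \<sigma> G f_inf :: real
  assumes prob: "prob_space M"
    and weights_nonneg: "\<And>i. i < C \<Longrightarrow> p i \<ge> 0"
    and weights_sum: "(\<Sum>i<C. p i) = 1"
    and alpha_pos: "\<alpha> > 0"
    and E_ge: "E \<ge> 1"
    and T_ge: "T \<ge> 1"
    and step: "\<gamma> = 1 / (2 * (\<alpha> + L) * sqrt (real T * real E))"
    \<comment> \<open>gradients and L-smoothness\<close>
    and grad: "\<And>i x. i < C \<Longrightarrow> (F i has_derivative (\<lambda>h. gradF i x \<bullet> h)) (at x)"
    and smooth: "\<And>i x y. i < C \<Longrightarrow> norm (gradF i x - gradF i y) \<le> L * norm (x - y)"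
    \<comment> \<open>lower-bounded global objective\<close>
    and lower: "\<And>x. (\<Sum>i<C. p i * F i x) \<ge> f_inf"
    \<comment> \<open>FedProx dynamics\<close>
    and init: "\<And>i \<omega>. i < C \<Longrightarrow> \<omega> \<in> space M \<Longrightarrow> w i 0 0 \<omega> = w0"
    and restart: "\<And>i t \<omega>. i < C \<Longrightarrow> \<omega> \<in> space M \<Longrightarrow>
        w i (Suc t) 0 \<omega> = avg_iter C p w t E \<omega>"
    and update: "\<And>i t k \<omega>. i < C \<Longrightarrow> k < E \<Longrightarrow> \<omega> \<in> space M \<Longrightarrow>
        w i t (Suc k) \<omega> = (1 - \<alpha> * \<gamma>) *\<^sub>R w i t k \<omega> + (\<alpha> * \<gamma>) *\<^sub>R avg_iter C p w t 0 \<omega>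
                          - \<gamma> *\<^sub>R g i t k \<omega>"
    \<comment> \<open>the past: a filtration containing all earlier stochastic gradients\<close>
    and g_meas: "\<And>i t k. i < C \<Longrightarrow> k < E \<Longrightarrow> g i t k \<in> borel_measurable M"
    and filt_sub: "\<And>t k. subalgebra M (Filt t k)"
    and filt_past: "\<And>j t k t' k'. j < C \<Longrightarrow> k' < E \<Longrightarrow> before (t', k') (t, k) \<Longrightarrow>
        g j t' k' \<in> borel_measurable (Filt t k)"
    \<comment> \<open>unbiasedness given the past (componentwise conditional expectation)\<close>
    and unbiased: "\<And>i t k b. i < C \<Longrightarrow> k < E \<Longrightarrow> b \<in> Basis \<Longrightarrow>
        AE \<omega> in M. real_cond_exp M (Filt t k) (\<lambda>\<omega>. g i t k \<omega> \<bullet> b) \<omega> = gradF i (w i t k \<omega>) \<bullet> b"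
    \<comment> \<open>independence across clients given the past\<close>
    and cond_indep: "\<And>t k f. k < E \<Longrightarrow>
        (\<forall>i<C. f i \<in> borel_measurable borel \<and> (\<exists>B. \<forall>x. \<bar>f i x\<bar> \<le> B)) \<Longrightarrow>
        AE \<omega> in M. real_cond_exp M (Filt t k) (\<lambda>\<omega>. \<Prod>i<C. f i (g i t k \<omega>)) \<omega>
                   = (\<Prod>i<C. real_cond_exp M (Filt t k) (\<lambda>\<omega>. f i (g i t k \<omega>)) \<omega>)"
    \<comment> \<open>bounded variance and bounded second moment\<close>
    and variance: "\<And>i t k. i < C \<Longrightarrow> k < E \<Longrightarrow>
        (\<integral>\<^sup>+ \<omega>. ennreal ((norm (g i t k \<omega> - gradF i (w i t k \<omega>)))\<^sup>2) \<partial>M) \<le> ennreal (\<sigma>\<^sup>2)"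
    and second_moment: "\<And>i t k. i < C \<Longrightarrow> k < E \<Longrightarrow>
        (\<integral>\<^sup>+ \<omega>. ennreal ((norm (g i t k \<omega>))\<^sup>2) \<partial>M) \<le> ennreal (G\<^sup>2)"
  shows "ennreal (1 / (real T * real E)) *
           (\<Sum>t<T. \<Sum>k<E. \<integral>\<^sup>+ \<omega>. ennreal ((norm (\<Sum>i<C. p i *\<^sub>R gradF i (avg_iter C p w t k \<omega>)))\<^sup>2) \<partial>M)
         \<le> ennreal (
             1 / sqrt (real T) *
               (8 * (\<alpha> + L) * ((\<Sum>i<C. p i * F i w0) - f_inf) / sqrt (real E)
                + L * (\<Sum>i<C. (p i)\<^sup>2) * \<sigma>\<^sup>2 / ((\<alpha> + L) * sqrt (real E))
                + \<alpha> * real E powr (3/2) * G\<^sup>2 / (\<alpha> + L))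
             + 2 * L\<^sup>2 * real E * G\<^sup>2 / ((\<alpha> + L)\<^sup>2 * real T)
             + \<alpha>\<^sup>2 * L * sqrt (real E) * G\<^sup>2 / (16 * (\<alpha> + L) ^ 3 * real T powr (3/2)))"
proof -
  interpret fp: fedprox M Filt C E T p F gradF w g w0 \<alpha> \<gamma> L \<sigma> G f_inf
    by (intro fedprox.intro) (rule assms; assumption?)+
  show ?thesis by (rule fp.main)
qed

end
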